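(* Let $\Omega\subset\mathbb{R}^2$, the constants $\theta>0$, $U>0$, $g$, $\gamma$, $\alpha$, $k\ge 1$, $\beta>0$, the function $\nu$, the data $\mathbf{f}$, $\mathbf{u}_0$, $c_0$, the finite element spaces $\mathbf{V}_h, M_h,\tilde H_h$ and the time step $\tau=T/N$ be as in the context, and let $(\mathbf{u}_h^n,p_h^n,c_h^n)_{0\le n\le N}$ be computed by the decoupled BDF2 finite element scheme described in the context. Assume the viscosity $\nu:\mathbb{R}\to\mathbb{R}$ is smooth and satisfies $$k^{-1}\le \nu(s)\le k,\qquad |\nu'(s)|\le \beta\qquad\forall s\in\mathbb{R}.$$ Then there is a constant $C>0$, independent of $\tau$ and $h$, such that for all $1\le m\le N-1$, $$\|\mathbf{u}_h^{m+1}\|_{L^2}^2+\|\hat{\mathbf{u}}_h^{m+1}\|_{L^2}^2+\|c_h^{m+1}\|_{L^2}^2+\|\hat c_h^{m+1}\|_{L^2}^2+2\tau k^{-1}\sum_{n=1}^{m}\|\nabla\mathbf{u}_h^{n+1}\|_{L^2}^2+2\tau\theta\sum_{n=1}^{m}\|\nabla c_h^{n+1}\|_{L^2}^2$$ $$\le \|\mathbf{u}_h^{1}\|_{L^2}^2+\|\hat{\mathbf{u}}_h^{1}\|_{L^2}^2+\|c_h^{1}\|_{L^2}^2+\|\hat c_h^{1}\|_{L^2}^2+C\tau\sum_{n=0}^{N-1}\big(\|\mathbf{f}^{n+1}\|_{L^2}^2+|\Omega|\big),$$ where $|\Omega|$ is the measure of $\Omega$.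
   Context: $\Omega\subset\mathbb{R}^2$ is a bounded domain with smooth boundary; $\mathbf{i}_2=(0,1)^T$; $x_2$ is the second coordinate. Spaces: $\mathbf{V}=H_0^1(\Omega)^2$, $M=L_0^2(\Omega)=\{q\in L^2(\Omega):\int_\Omega q\,dx=0\}$, $\tilde H=H^1(\Omega)\cap L_0^2(\Omega)$. Trilinear forms: $B(\mathbf{u},\mathbf{v},\mathbf{w})=\tfrac12\int_\Omega(\mathbf{u}\cdot\nabla\mathbf{v})\cdot\mathbf{w}\,dx-\tfrac12\int_\Omega(\mathbf{u}\cdot\nabla\mathbf{w})\cdot\mathbf{v}\,dx$ and $b(\mathbf{u},c,r)=\tfrac12\int_\Omega(\mathbf{u}\cdot\nabla c)r\,dx-\tfrac12\int_\Omega(\mathbf{u}\cdot\nabla r)c\,dx$; $(\cdot,\cdot)$ is the $L^2(\Omega)$ inner product. $\mathbf{f}\in L^\infty(0,T;L^2(\Omega)^2)$, $\mathbf{f}^n=\mathbf{f}(t_n)$; $\mathbf{u}_0\in H^2(\Omega)^2$ divergence-free with zero trace, $c_0\in\tilde H\cap H^2(\Omega)$. Time grid: $N\in\mathbb{N}$, $\tau=T/N$, $t_n=n\tau$. Notation: $D_\tau v^{n+1}=\frac{3v^{n+1}-4v^n+v^{n-1}}{2\tau}$, $d_\tau v^{1}=\frac{v^{1}-v^0}{\tau}$, $\hat v^n=2v^n-v^{n-1}$. Space discretization: $\mathcal{T}_h$ is a quasi-uniform triangulation of $\Omega$ with mesh size $h$; $\mathbf{V}_h=\{\mathbf{v}_h\in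 C(\bar\Omega)^2\cap\mathbf{V}:\mathbf{v}_h|_K\in(P_1(K)\oplus b(K))^2\ \forall K\in\mathcal{T}_h\}$ ($b(K)$ the cubic bubble; MINI element), $M_h=\{q_h\in C(\bar\Omega):q_h|_K\in P_1(K)\ \forall K,\ \int_\Omega q_h=0\}$, $\tilde H_h=\{r_h\in C(\bar\Omega)\cap\tilde H: r_h|_K\in P_1(K)\ \forall K\}$. Initial values $\mathbf{u}_h^0=\mathbf{I}_h\mathbf{u}_0$, $c_h^0=\Pi_hc_0$ (standard interpolants onto $\mathbf{V}_h$, $\tilde H_h$). Decoupled BDF2 scheme. Step I: find $(\mathbf{u}_h^1,p_h^1)\in\mathbf{V}_h\times M_h$ with, for all $(\mathbf{v}_h,q_h)\in\mathbf{V}_h\times M_h$, $(d_\tau\mathbf{u}_h^1,\mathbf{v}_h)+(\nu(c_h^0+\alpha)\nabla\mathbf{u}_h^1,\nabla\mathbf{v}_h)+B(\mathbf{u}_h^0,\mathbf{u}_h^1,\mathbf{v}_h)-(\nabla\cdot\mathbf{v}_h,p_h^1)+(\nabla\cdot\mathbf{u}_h^1,q_h)=-g((1+\gamma c_h^0)\mathbf{i}_2,\mathbf{v}_h)+(\mathbf{f}^1,\mathbf{v}_h)$, and $c_h^1\in\tilde H_h$ with, for all $r_h\in\tilde H_h$, $(d_\tau c_h^1,r_h)+\theta(\nabla c_h^1,\nabla r_h)+b(\mathbf{u}_h^0,c_h^1,r_h)-U(c_h^0,\partial r_h/\partial x_2)=U\alpha(1,\partial r_h/\partial x_2)$. Step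 II: for $n\ge1$, find $(\mathbf{u}_h^{n+1},p_h^{n+1})\in\mathbf{V}_h\times M_h$ with, for all $(\mathbf{v}_h,q_h)$, $(D_\tau\mathbf{u}_h^{n+1},\mathbf{v}_h)+(\nu(\hat c_h^n+\alpha)\nabla\mathbf{u}_h^{n+1},\nabla\mathbf{v}_h)+B(\hat{\mathbf{u}}_h^n,\mathbf{u}_h^{n+1},\mathbf{v}_h)-(\nabla\cdot\mathbf{v}_h,p_h^{n+1})+(\nabla\cdot\mathbf{u}_h^{n+1},q_h)=-g((1+\gamma\hat c_h^n)\mathbf{i}_2,\mathbf{v}_h)+(\mathbf{f}^{n+1},\mathbf{v}_h)$, and $c_h^{n+1}\in\tilde H_h$ with, for all $r_h\in\tilde H_h$, $(D_\tau c_h^{n+1},r_h)+\theta(\nabla c_h^{n+1},\nabla r_h)+b(\hat{\mathbf{u}}_h^n,c_h^{n+1},r_h)-U(\hat c_h^n,\partial r_h/\partial x_2)=U\alpha(1,\partial r_h/\partial x_2)$. *)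

theory Defs
  imports "HOL-Analysis.Analysis"
begin

type_synonym pt = "real^2"

section \<open>Derivatives (classical, taken where they exist; a.e. gradient of piecewise polynomials)\<close>

definition pd :: "2 \<Rightarrow> (pt \<Rightarrow> real) \<Rightarrow> pt \<Rightarrow> real" where
  "pd i f x = (if f differentiable (at x) then frechet_derivative f (at x) (axis i 1) else 0)"

definition pgrad :: "(pt \<Rightarrow> real) \<Rightarrow> pt \<Rightarrow> pt" where
  "pgrad f x = (\<chi> i. pd i f x)"

definition vcomp :: "(pt \<Rightarrow> pt) \<Rightarrow> 2 \<Rightarrow> pt \<Rightarrow> real" where
  "vcomp u i = (\<lambda>x. u x $ i)"

definition pdiv :: "(pt \<Rightarrow> pt) \<Rightarrow> pt \<Rightarrow> real" where
  "pdiv u x = (\<Sum>i\<in>UNIV. pd i (vcomp u i) x)"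

fun pderivs :: "2 list \<Rightarrow> (pt \<Rightarrow> real) \<Rightarrow> pt \<Rightarrow> real" where
  "pderivs [] f = f"
| "pderivs (i # is) f = pd i (pderivs is f)"

definition smooth_fun :: "(pt \<Rightarrow> real) \<Rightarrow> bool" where
  "smooth_fun \<phi> \<longleftrightarrow> (\<forall>is x. pderivs is \<phi> differentiable (at x))"

definition test_fun :: "pt set \<Rightarrow> (pt \<Rightarrow> real) \<Rightarrow> bool" where
  "test_fun \<Omega> \<phi> \<longleftrightarrow> smooth_fun \<phi> \<and> compact (closure {x. \<phi> x \<noteq> 0})
      \<and> closure {x. \<phi> x \<noteq> 0} \<subseteq> \<Omega>"

definition L2 :: "pt set \<Rightarrow> (pt \<Rightarrow> real) \<Rightarrow> bool" where
  "L2 \<Omega> f \<longleftrightarrow> set_borel_measurable lborel \<Omega> f \<and> set_integrable lborel \<Omega> (\<lambda>x. (f x)\<^sup>2)"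

definition weak_pd :: "pt set \<Rightarrow> (pt \<Rightarrow> real) \<Rightarrow> 2 \<Rightarrow> (pt \<Rightarrow> real) \<Rightarrow> bool" where
  "weak_pd \<Omega> f i g \<longleftrightarrow> (\<forall>\<phi>. test_fun \<Omega> \<phi> \<longrightarrow>
      (LINT x:\<Omega>|lborel. f x * pd i \<phi> x) = - (LINT x:\<Omega>|lborel. g x * \<phi> x))"

definition H1 :: "pt set \<Rightarrow> (pt \<Rightarrow> real) \<Rightarrow> bool" where
  "H1 \<Omega> f \<longleftrightarrow> L2 \<Omega> f \<and> (\<forall>i. \<exists>g. L2 \<Omega> g \<and> weak_pd \<Omega> f i g)"

definition H2 :: "pt set \<Rightarrow> (pt \<Rightarrow> real) \<Rightarrow> bool" where
  "H2 \<Omega> f \<longleftrightarrow> L2 \<Omega> f \<and> (\<forall>i. \<exists>g. H1 \<Omega> g \<and> weak_pd \<Omega> f i g)"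

definition ip :: "pt set \<Rightarrow> (pt \<Rightarrow> real) \<Rightarrow> (pt \<Rightarrow> real) \<Rightarrow> real" where
  "ip \<Omega> f g = (LINT x:\<Omega>|lborel. f x * g x)"

definition ipv :: "pt set \<Rightarrow> (pt \<Rightarrow> pt) \<Rightarrow> (pt \<Rightarrow> pt) \<Rightarrow> real" where
  "ipv \<Omega> u v = (LINT x:\<Omega>|lborel. u x \<bullet> v x)"

definition nrm2 :: "pt set \<Rightarrow> (pt \<Rightarrow> real) \<Rightarrow> real" where
  "nrm2 \<Omega> f = ip \<Omega> f f"

definition nrm2v :: "pt set \<Rightarrow> (pt \<Rightarrow> pt) \<Rightarrow> real" where
  "nrm2v \<Omega> u = ipv \<Omega> u u"

definition wgrad_v :: "pt set \<Rightarrow> (pt \<Rightarrow> real) \<Rightarrow> (pt \<Rightarrow> pt) \<Rightarrow> (pt \<Rightarrow> pt) \<Rightarrow> real" where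
  "wgrad_v \<Omega> w u v = (LINT x:\<Omega>|lborel. w x * (\<Sum>i\<in>UNIV. pgrad (vcomp u i) x \<bullet> pgrad (vcomp v i) x))"

definition grad_ip :: "pt set \<Rightarrow> (pt \<Rightarrow> real) \<Rightarrow> (pt \<Rightarrow> real) \<Rightarrow> real" where
  "grad_ip \<Omega> c r = (LINT x:\<Omega>|lborel. pgrad c x \<bullet> pgrad r x)"

definition gnrm2v :: "pt set \<Rightarrow> (pt \<Rightarrow> pt) \<Rightarrow> real" where
  "gnrm2v \<Omega> u = wgrad_v \<Omega> (\<lambda>_. 1) u u"

definition gnrm2 :: "pt set \<Rightarrow> (pt \<Rightarrow> real) \<Rightarrow> real" where
  "gnrm2 \<Omega> c = grad_ip \<Omega> c c"

definition conv :: "(pt \<Rightarrow> pt) \<Rightarrow> (pt \<Rightarrow> pt) \<Rightarrow> (pt \<Rightarrow> pt) \<Rightarrow> pt \<Rightarrow> real" where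
  "conv u v w x = (\<Sum>j\<in>UNIV. (u x \<bullet> pgrad (vcomp v j) x) * (w x $ j))"

definition Btri :: "pt set \<Rightarrow> (pt \<Rightarrow> pt) \<Rightarrow> (pt \<Rightarrow> pt) \<Rightarrow> (pt \<Rightarrow> pt) \<Rightarrow> real" where
  "Btri \<Omega> u v w = (1/2) * (LINT x:\<Omega>|lborel. conv u v w x)
                  - (1/2) * (LINT x:\<Omega>|lborel. conv u w v x)"

definition btri :: "pt set \<Rightarrow> (pt \<Rightarrow> pt) \<Rightarrow> (pt \<Rightarrow> real) \<Rightarrow> (pt \<Rightarrow> real) \<Rightarrow> real" where
  "btri \<Omega> u c r = (1/2) * (LINT x:\<Omega>|lborel. (u x \<bullet> pgrad c x) * r x)
                  - (1/2) * (LINT x:\<Omega>|lborel. (u x \<bullet> pgrad r x) * c x)"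

definition tri :: "pt \<times> pt \<times> pt \<Rightarrow> pt set" where
  "tri t = (case t of (a, b, c) \<Rightarrow> convex hull {a, b, c})"

definition tverts :: "pt \<times> pt \<times> pt \<Rightarrow> pt set" where
  "tverts t = (case t of (a, b, c) \<Rightarrow> {a, b, c})"

definition fe_triangulation :: "pt set \<Rightarrow> (pt \<times> pt \<times> pt) set \<Rightarrow> bool" where
  "fe_triangulation \<Omega> Tr \<longleftrightarrow> finite Tr \<and> Tr \<noteq> {}
     \<and> (\<forall>t\<in>Tr. \<not> collinear (tverts t))
     \<and> (\<Union>t\<in>Tr. tri t) = closure \<Omega>
     \<and> (\<forall>t\<in>Tr. \<forall>t'\<in>Tr. tverts t \<noteq> tverts t' \<longrightarrow>
            tri t \<inter> tri t' = convex hull (tverts t \<inter> tverts t'))"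

definition mesh_size :: "(pt \<times> pt \<times> pt) set \<Rightarrow> real" where
  "mesh_size Tr = Max ((\<lambda>t. diameter (tri t)) ` Tr)"

definition quasi_uniform :: "real \<Rightarrow> (pt \<times> pt \<times> pt) set \<Rightarrow> bool" where
  "quasi_uniform \<sigma> Tr \<longleftrightarrow> (\<forall>t\<in>Tr. \<exists>z. ball z (\<sigma> * mesh_size Tr) \<subseteq> tri t)"

definition cross2 :: "pt \<Rightarrow> pt \<Rightarrow> real" where
  "cross2 v w = v $ 1 * w $ 2 - v $ 2 * w $ 1"

definition bary :: "pt \<Rightarrow> pt \<Rightarrow> pt \<Rightarrow> pt \<Rightarrow> real" where
  "bary a b c x = cross2 (b - x) (c - x) / cross2 (b - a) (c - a)"

definition bubble :: "pt \<times> pt \<times> pt \<Rightarrow> pt \<Rightarrow> real" where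
  "bubble t x = (case t of (a, b, c) \<Rightarrow> bary a b c x * bary b c a x * bary c a b x)"

definition P1b_on :: "pt \<times> pt \<times> pt \<Rightarrow> (pt \<Rightarrow> real) \<Rightarrow> bool" where
  "P1b_on t f \<longleftrightarrow> (\<exists>w d e. \<forall>x\<in>tri t. f x = w \<bullet> x + d + e * bubble t x)"

definition P1_on :: "pt \<times> pt \<times> pt \<Rightarrow> (pt \<Rightarrow> real) \<Rightarrow> bool" where
  "P1_on t f \<longleftrightarrow> (\<exists>w d. \<forall>x\<in>tri t. f x = w \<bullet> x + d)"

definition Vh :: "pt set \<Rightarrow> (pt \<times> pt \<times> pt) set \<Rightarrow> (pt \<Rightarrow> pt) set" where
  "Vh \<Omega> Tr = {v. continuous_on (closure \<Omega>) v \<and> (\<forall>x\<in>frontier \<Omega>. v x = 0)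
                  \<and> (\<forall>t\<in>Tr. \<forall>i. P1b_on t (vcomp v i))}"

definition Mh :: "pt set \<Rightarrow> (pt \<times> pt \<times> pt) set \<Rightarrow> (pt \<Rightarrow> real) set" where
  "Mh \<Omega> Tr = {q. continuous_on (closure \<Omega>) q \<and> (\<forall>t\<in>Tr. P1_on t q)
                  \<and> (LINT x:\<Omega>|lborel. q x) = 0}"

definition Hh :: "pt set \<Rightarrow> (pt \<times> pt \<times> pt) set \<Rightarrow> (pt \<Rightarrow> real) set" where
  "Hh \<Omega> Tr = {r. continuous_on (closure \<Omega>) r \<and> (\<forall>t\<in>Tr. P1_on t r)
                  \<and> (LINT x:\<Omega>|lborel. r x) = 0}"

definition p1_interp :: "(pt \<times> pt \<times> pt) set \<Rightarrow> (pt \<Rightarrow> real) \<Rightarrow> pt \<Rightarrow> real" where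
  "p1_interp Tr w x = (if \<exists>t\<in>Tr. x \<in> tri t then
      (case (SOME t. t \<in> Tr \<and> x \<in> tri t) of (a, b, c) \<Rightarrow>
         w a * bary a b c x + w b * bary b c a x + w c * bary c a b x)
    else 0)"

definition Ih :: "(pt \<times> pt \<times> pt) set \<Rightarrow> (pt \<Rightarrow> pt) \<Rightarrow> pt \<Rightarrow> pt" where
  "Ih Tr w x = (\<chi> i. p1_interp Tr (vcomp w i) x)"

definition Pih :: "pt set \<Rightarrow> (pt \<times> pt \<times> pt) set \<Rightarrow> (pt \<Rightarrow> real) \<Rightarrow> pt \<Rightarrow> real" where
  "Pih \<Omega> Tr w x = p1_interp Tr w x
      - (LINT y:\<Omega>|lborel. p1_interp Tr w y) / measure lborel \<Omega>"

definition hatv :: "(nat \<Rightarrow> pt \<Rightarrow> pt) \<Rightarrow> nat \<Rightarrow> pt \<Rightarrow> pt" where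
  "hatv u n = (\<lambda>x. 2 *\<^sub>R u n x - u (n - 1) x)"

definition hats :: "(nat \<Rightarrow> pt \<Rightarrow> real) \<Rightarrow> nat \<Rightarrow> pt \<Rightarrow> real" where
  "hats c n = (\<lambda>x. 2 * c n x - c (n - 1) x)"

definition bdf2_solution ::
  "pt set \<Rightarrow> (real \<Rightarrow> real) \<Rightarrow> real \<Rightarrow> real \<Rightarrow> real \<Rightarrow> real \<Rightarrow> real \<Rightarrow>
   (real \<Rightarrow> pt \<Rightarrow> pt) \<Rightarrow> (pt \<Rightarrow> pt) \<Rightarrow> (pt \<Rightarrow> real) \<Rightarrow> real \<Rightarrow>
   (pt \<times> pt \<times> pt) set \<Rightarrow> nat \<Rightarrow>
   (nat \<Rightarrow> pt \<Rightarrow> pt) \<Rightarrow> (nat \<Rightarrow> pt \<Rightarrow> real) \<Rightarrow> (nat \<Rightarrow> pt \<Rightarrow> real) \<Rightarrow> bool" where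
  "bdf2_solution \<Omega> \<nu> \<alpha> \<theta> U g \<gamma> f u0 c0 T Tr N u p c \<longleftrightarrow>
    (let \<tau> = T / real N in
     (\<forall>n\<le>N. u n \<in> Vh \<Omega> Tr \<and> c n \<in> Hh \<Omega> Tr)
   \<and> (\<forall>n\<in>{1..N}. p n \<in> Mh \<Omega> Tr)
   \<and> u 0 = Ih Tr u0 \<and> c 0 = Pih \<Omega> Tr c0
   \<comment> \<open>Step I\<close>
   \<and> (\<forall>v\<in>Vh \<Omega> Tr. \<forall>q\<in>Mh \<Omega> Tr.
        ipv \<Omega> (\<lambda>x. (1 / \<tau>) *\<^sub>R (u 1 x - u 0 x)) v
        + wgrad_v \<Omega> (\<lambda>x. \<nu> (c 0 x + \<alpha>)) (u 1) v
        + Btri \<Omega> (u 0) (u 1) v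
        - ip \<Omega> (pdiv v) (p 1) + ip \<Omega> (pdiv (u 1)) q
        = - g * ip \<Omega> (\<lambda>x. 1 + \<gamma> * c 0 x) (vcomp v 2) + ipv \<Omega> (f (1 * \<tau>)) v)
   \<and> (\<forall>r\<in>Hh \<Omega> Tr.
        ip \<Omega> (\<lambda>x. (c 1 x - c 0 x) / \<tau>) r + \<theta> * grad_ip \<Omega> (c 1) r
        + btri \<Omega> (u 0) (c 1) r - U * ip \<Omega> (c 0) (pd 2 r)
        = U * \<alpha> * ip \<Omega> (\<lambda>x. 1) (pd 2 r))
   \<comment> \<open>Step II, n = 1, ..., N-1\<close>
   \<and> (\<forall>n. 1 \<le> n \<and> n + 1 \<le> N \<longrightarrow>
        (\<forall>v\<in>Vh \<Omega> Tr. \<forall>q\<in>Mh \<Omega> Tr.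
          ipv \<Omega> (\<lambda>x. (1 / (2 * \<tau>)) *\<^sub>R (3 *\<^sub>R u (n + 1) x - 4 *\<^sub>R u n x + u (n - 1) x)) v
          + wgrad_v \<Omega> (\<lambda>x. \<nu> (hats c n x + \<alpha>)) (u (n + 1)) v
          + Btri \<Omega> (hatv u n) (u (n + 1)) v
          - ip \<Omega> (pdiv v) (p (n + 1)) + ip \<Omega> (pdiv (u (n + 1))) q
          = - g * ip \<Omega> (\<lambda>x. 1 + \<gamma> * hats c n x) (vcomp v 2)
            + ipv \<Omega> (f (real (n + 1) * \<tau>)) v)
      \<and> (\<forall>r\<in>Hh \<Omega> Tr.
          ip \<Omega> (\<lambda>x. (3 * c (n + 1) x - 4 * c n x + c (n - 1) x) / (2 * \<tau>)) r
          + \<theta> * grad_ip \<Omega> (c (n + 1)) r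
          + btri \<Omega> (hatv u n) (c (n + 1)) r - U * ip \<Omega> (hats c n) (pd 2 r)
          = U * \<alpha> * ip \<Omega> (\<lambda>x. 1) (pd 2 r))))"

end

theory Submission
  imports Defs
begin


definition good :: "pt set \<Rightarrow> (pt \<Rightarrow> real) \<Rightarrow> bool" where
  "good \<Omega> f \<longleftrightarrow> set_borel_measurable lborel \<Omega> f \<and> (\<exists>B. \<forall>x\<in>\<Omega>. \<bar>f x\<bar> \<le> B)"

lemma set_borel_measurable_mult:
  fixes f g :: "pt \<Rightarrow> real"
  assumes "set_borel_measurable lborel \<Omega> f" "set_borel_measurable lborel \<Omega> g"
  shows "set_borel_measurable lborel \<Omega> (\<lambda>x. f x * g x)"
proof -
  have "(\<lambda>x. indicator \<Omega> x *\<^sub>R (f x * g x)) = (\<lambda>x. (indicator \<Omega> x *\<^sub>R f x) * (indicator \<Omega> x *\<^sub>R g x))"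
    by (auto simp: indicator_def)
  then show ?thesis using assms unfolding set_borel_measurable_def by simp
qed

lemma set_borel_measurable_add:
  fixes f g :: "pt \<Rightarrow> real"
  assumes "set_borel_measurable lborel \<Omega> f" "set_borel_measurable lborel \<Omega> g"
  shows "set_borel_measurable lborel \<Omega> (\<lambda>x. f x + g x)"
proof -
  have "(\<lambda>x. indicator \<Omega> x *\<^sub>R (f x + g x)) = (\<lambda>x. (indicator \<Omega> x *\<^sub>R f x) + (indicator \<Omega> x *\<^sub>R g x))"
    by (auto simp: indicator_def)
  then show ?thesis using assms unfolding set_borel_measurable_def by simp
qed

lemma set_borel_measurable_const:
  assumes "\<Omega> \<in> sets lborel"
  shows "set_borel_measurable lborel \<Omega> (\<lambda>x. c::real)"
  using assms unfolding set_borel_measurable_def by simp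

lemma good_const: "\<Omega> \<in> sets lborel \<Longrightarrow> good \<Omega> (\<lambda>x. c)"
  unfolding good_def using set_borel_measurable_const by (metis order_refl)

lemma good_add: "good \<Omega> f \<Longrightarrow> good \<Omega> g \<Longrightarrow> good \<Omega> (\<lambda>x. f x + g x)"
  unfolding good_def
proof (elim conjE exE, intro conjI)
  fix B1 B2 assume "\<forall>x\<in>\<Omega>. \<bar>f x\<bar> \<le> B1" "\<forall>x\<in>\<Omega>. \<bar>g x\<bar> \<le> B2"
  then show "\<exists>B. \<forall>x\<in>\<Omega>. \<bar>f x + g x\<bar> \<le> B"
    by (intro exI[of _ "B1+B2"]) (smt (verit))
qed (rule set_borel_measurable_add)

lemma good_mult: "good \<Omega> f \<Longrightarrow> good \<Omega> g \<Longrightarrow> good \<Omega> (\<lambda>x. f x * g x)"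
  unfolding good_def
proof (elim conjE exE, intro conjI)
  fix B1 B2 assume a: "\<forall>x\<in>\<Omega>. \<bar>f x\<bar> \<le> B1" "\<forall>x\<in>\<Omega>. \<bar>g x\<bar> \<le> B2"
  show "\<exists>B. \<forall>x\<in>\<Omega>. \<bar>f x * g x\<bar> \<le> B"
  proof (intro exI[of _ "B1*B2"] ballI)
    fix x assume "x \<in> \<Omega>"
    then have "\<bar>f x\<bar> \<le> B1" "\<bar>g x\<bar> \<le> B2" using a by auto
    then show "\<bar>f x * g x\<bar> \<le> B1 * B2"
      by (simp add: abs_mult mult_mono')
  qed
qed (rule set_borel_measurable_mult)

lemma good_cmult: "\<Omega> \<in> sets lborel \<Longrightarrow> good \<Omega> f \<Longrightarrow> good \<Omega> (\<lambda>x. a * f x)"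
  using good_mult[OF good_const] by blast

lemma good_diff: "\<Omega> \<in> sets lborel \<Longrightarrow> good \<Omega> f \<Longrightarrow> good \<Omega> g \<Longrightarrow> good \<Omega> (\<lambda>x. f x - g x)"
  using good_add[of \<Omega> f "\<lambda>x. (-1) * g x"] good_cmult[of \<Omega> g "-1"] by simp

lemma good_integrable:
  assumes fin: "emeasure lborel \<Omega> < \<infinity>" and om: "\<Omega> \<in> sets lborel" and g: "good \<Omega> f"
  shows "set_integrable lborel \<Omega> f"
proof -
  obtain B where B: "\<forall>x\<in>\<Omega>. \<bar>f x\<bar> \<le> B" and m: "set_borel_measurable lborel \<Omega> f"
    using g unfolding good_def by blast
  have "set_integrable lborel \<Omega> (\<lambda>x. B)"
    unfolding set_integrable_def using fin om
    by (intro integrable_scaleR_left integrable_real_indicator) auto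
  then show ?thesis
    by (rule set_integrable_bound[OF _ m]) (use B in \<open>auto intro!: AE_I2\<close>)
qed

lemma set_integral_nonneg':
  fixes f :: "pt \<Rightarrow> real"
  assumes "\<And>x. x \<in> \<Omega> \<Longrightarrow> 0 \<le> f x"
  shows "0 \<le> (LINT x:\<Omega>|lborel. f x)"
  unfolding set_lebesgue_integral_def
  by (rule integral_nonneg_AE) (use assms in \<open>auto simp: indicator_def\<close>)

lemma set_integral_not_integrable:
  fixes f :: "pt \<Rightarrow> real"
  assumes "\<not> set_integrable lborel \<Omega> f"
  shows "(LINT x:\<Omega>|lborel. f x) = 0"
  using assms unfolding set_lebesgue_integral_def set_integrable_def
  by (simp add: not_integrable_integral_eq)

lemma set_integral_abs_bound:
  fixes h g :: "pt \<Rightarrow> real"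
  assumes gi: "set_integrable lborel \<Omega> g" and b: "\<And>x. x \<in> \<Omega> \<Longrightarrow> \<bar>h x\<bar> \<le> g x"
  shows "\<bar>LINT x:\<Omega>|lborel. h x\<bar> \<le> (LINT x:\<Omega>|lborel. g x)"
proof (cases "set_integrable lborel \<Omega> h")
  case True
  have "(LINT x:\<Omega>|lborel. h x) \<le> (LINT x:\<Omega>|lborel. g x)"
    by (rule set_integral_mono[OF True gi]) (use b in \<open>smt (verit)\<close>)
  moreover have "(LINT x:\<Omega>|lborel. - h x) \<le> (LINT x:\<Omega>|lborel. g x)"
    by (rule set_integral_mono[OF _ gi]) (use b True in \<open>auto simp: set_integrable_def\<close>, smt (verit) b)
  moreover have "(LINT x:\<Omega>|lborel. - h x) = - (LINT x:\<Omega>|lborel. h x)"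
    by (rule set_integral_uminus[OF True])
  ultimately show ?thesis by linarith
next
  case False
  then have "(LINT x:\<Omega>|lborel. h x) = 0" by (rule set_integral_not_integrable)
  moreover have "0 \<le> (LINT x:\<Omega>|lborel. g x)"
    by (rule set_integral_nonneg') (use b in \<open>smt (verit)\<close>)
  ultimately show ?thesis by simp
qed

lemma young_pt:
  fixes a b e :: real
  assumes "e > 0"
  shows "\<bar>a * b\<bar> \<le> (1/(2*e)) * (a * a) + (e/2) * (b * b)"
proof -
  have 1: "0 \<le> (a - e*b) * (a - e*b)" "0 \<le> (a + e*b) * (a + e*b)" by auto
  have "2*e*\<bar>a*b\<bar> \<le> a*a + e*e*(b*b)"
    using 1 by (auto simp: abs_if algebra_simps) 
  then have "\<bar>a*b\<bar> \<le> (a*a + e*e*(b*b)) / (2*e)" using assms by (simp add: field_simps)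
  also have "\<dots> = (1/(2*e)) * (a * a) + (e/2) * (b * b)" using assms by (simp add: field_simps)
  finally show ?thesis .
qed

lemma young_vec:
  fixes a b :: pt and e :: real
  assumes "e > 0"
  shows "\<bar>a \<bullet> b\<bar> \<le> (1/(2*e)) * (a \<bullet> a) + (e/2) * (b \<bullet> b)"
proof -
  have 1: "0 \<le> (a - e*\<^sub>Rb) \<bullet> (a - e*\<^sub>Rb)" "0 \<le> (a + e*\<^sub>Rb) \<bullet> (a + e*\<^sub>Rb)" by auto
  then have 2: "0 \<le> a \<bullet> a - 2*e*(a\<bullet>b) + e*e*(b\<bullet>b)" "0 \<le> a \<bullet> a + 2*e*(a\<bullet>b) + e*e*(b\<bullet>b)"
    by (auto simp: inner_diff_left inner_diff_right inner_add_left inner_add_right inner_commute algebra_simps)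
  have "2*e*\<bar>a\<bullet>b\<bar> \<le> a\<bullet>a + e*e*(b\<bullet>b)"
    using 2 by (auto simp: abs_if algebra_simps) 
  then have "\<bar>a\<bullet>b\<bar> \<le> (a\<bullet>a + e*e*(b\<bullet>b)) / (2*e)" using assms by (simp add: field_simps)
  also have "\<dots> = (1/(2*e)) * (a \<bullet> a) + (e/2) * (b \<bullet> b)" using assms by (simp add: field_simps)
  finally show ?thesis .
qed

lemma young_ip:
  assumes e: "e > 0" and hi: "set_integrable lborel \<Omega> (\<lambda>x. h x * h x)"
    and vi: "set_integrable lborel \<Omega> (\<lambda>x. v x * v x)"
  shows "\<bar>ip \<Omega> h v\<bar> \<le> (1/(2*e)) * nrm2 \<Omega> h + (e/2) * nrm2 \<Omega> v"
proof -
  have "\<bar>ip \<Omega> h v\<bar> \<le> (LINT x:\<Omega>|lborel. (1/(2*e)) * (h x * h x) + (e/2) * (v x * v x))"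
    unfolding ip_def
    by (rule set_integral_abs_bound) (use hi vi young_pt[OF e] in auto)
  also have "\<dots> = (1/(2*e)) * nrm2 \<Omega> h + (e/2) * nrm2 \<Omega> v"
    using hi vi by (simp add: nrm2_def ip_def)
  finally show ?thesis .
qed

lemma young_ipv:
  assumes e: "e > 0" and hi: "set_integrable lborel \<Omega> (\<lambda>x. h x \<bullet> h x)"
    and vi: "set_integrable lborel \<Omega> (\<lambda>x. v x \<bullet> v x)"
  shows "\<bar>ipv \<Omega> h v\<bar> \<le> (1/(2*e)) * nrm2v \<Omega> h + (e/2) * nrm2v \<Omega> v"
proof -
  have "\<bar>ipv \<Omega> h v\<bar> \<le> (LINT x:\<Omega>|lborel. (1/(2*e)) * (h x \<bullet> h x) + (e/2) * (v x \<bullet> v x))"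
    unfolding ipv_def
    by (rule set_integral_abs_bound) (use hi vi young_vec[OF e] in auto)
  also have "\<dots> = (1/(2*e)) * nrm2v \<Omega> h + (e/2) * nrm2v \<Omega> v"
    using hi vi by (simp add: nrm2v_def ipv_def)
  finally show ?thesis .
qed

lemma weight_lower:
  fixes w S :: "pt \<Rightarrow> real"
  assumes k: "k > 0" and wm: "set_borel_measurable lborel \<Omega> w"
    and wb: "\<And>x. 1/k \<le> w x \<and> w x \<le> k" and S: "\<And>x. 0 \<le> S x"
  shows "(1/k) * (LINT x:\<Omega>|lborel. S x) \<le> (LINT x:\<Omega>|lborel. w x * S x)"
proof (cases "set_integrable lborel \<Omega> S")
  case True
  have Sm: "set_borel_measurable lborel \<Omega> S"
    using True unfolding set_integrable_def set_borel_measurable_def by auto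
  have wS: "set_integrable lborel \<Omega> (\<lambda>x. w x * S x)"
  proof (rule set_integrable_bound[of _ _ "\<lambda>x. k * S x"])
    show "set_integrable lborel \<Omega> (\<lambda>x. k * S x)" using True by simp
    show "set_borel_measurable lborel \<Omega> (\<lambda>x. w x * S x)"
      by (rule set_borel_measurable_mult[OF wm Sm])
    show "AE x in lborel. x \<in> \<Omega> \<longrightarrow> norm (w x * S x) \<le> norm (k * S x)"
    proof (intro AE_I2 impI)
      fix x
      have "0 \<le> w x" using wb[of x] k by (smt (verit) divide_pos_pos)
      then show "norm (w x * S x) \<le> norm (k * S x)" using wb[of x] S[of x] k
        by (simp add: abs_mult mult_right_mono)
    qed
  qed
  have "(1/k) * (LINT x:\<Omega>|lborel. S x) = (LINT x:\<Omega>|lborel. (1/k) * S x)" by simp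
  also have "\<dots> \<le> (LINT x:\<Omega>|lborel. w x * S x)"
  proof (rule set_integral_mono)
    fix x
    have "(1/k) * S x \<le> w x * S x" using wb[of x] S[of x] by (intro mult_right_mono) auto
    then show "(1/k) * S x \<le> w x * S x" .
  qed (use True wS in auto)
  finally show ?thesis .
next
  case False
  then have "(LINT x:\<Omega>|lborel. S x) = 0" by (rule set_integral_not_integrable)
  moreover have "0 \<le> (LINT x:\<Omega>|lborel. w x * S x)"
  proof (rule set_integral_nonneg')
    fix x
    have "0 \<le> w x" using wb[of x] k by (smt (verit) divide_pos_pos)
    then show "0 \<le> w x * S x" using S[of x] by simp
  qed
  ultimately show ?thesis by simp
qed

lemma cross_nz:
  assumes "\<not> collinear {a, b, c::pt}"
  shows "cross2 (b - a) (c - a) \<noteq> 0"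
proof
  assume h: "cross2 (b - a) (c - a) = 0"
  have "collinear {0, b - a, c - a}"
  proof (cases "b - a = 0")
    case True then show ?thesis by (simp add: collinear_lemma)
  next
    case False
    define x where "x = b - a"
    define y where "y = c - a"
    have h2: "x $ 1 * y $ 2 = x $ 2 * y $ 1" using h unfolding cross2_def x_def y_def by simp
    have nz: "x \<bullet> x \<noteq> 0" using False x_def by simp
    have xx: "x \<bullet> x = x$1*x$1 + x$2*x$2" "y \<bullet> x = y$1*x$1 + y$2*x$2"
      by (simp_all add: inner_vec_def sum_2)
    have "y = ((y \<bullet> x) / (x \<bullet> x)) *\<^sub>R x"
    proof -
      have "y $ i = ((y \<bullet> x) / (x \<bullet> x)) * x $ i" for i
      proof -
        have "y $ i * (x \<bullet> x) = (y \<bullet> x) * x $ i"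
          using exhaust_2[of i] h2 unfolding xx by (auto simp: algebra_simps)
        then show ?thesis using nz by (simp add: field_simps)
      qed
      then show ?thesis by (simp add: vec_eq_iff)
    qed
    then show ?thesis unfolding collinear_lemma x_def y_def by blast
  qed
  then have "collinear {b, a, c}" by (subst collinear_3) auto
  moreover have "{b, a, c} = {a, b, c}" by auto
  ultimately show False using assms by simp
qed

lemma cramer:
  fixes p q e :: pt
  assumes "cross2 p q \<noteq> 0"
  shows "e = (cross2 e q / cross2 p q) *\<^sub>R p + (cross2 p e / cross2 p q) *\<^sub>R q"
proof -
  have "e $ i = (cross2 e q / cross2 p q) * p $ i + (cross2 p e / cross2 p q) * q $ i" for i
  proof -
    have "e $ i * cross2 p q = cross2 e q * p $ i + cross2 p e * q $ i"
      using exhaust_2[of i] by (auto simp: cross2_def algebra_simps)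
    then show ?thesis using assms by (simp add: field_simps)
  qed
  then show ?thesis by (simp add: vec_eq_iff)
qed

lemma dir_deriv:
  fixes r :: "pt \<Rightarrow> real"
  assumes K: "convex K" "x \<in> K" "v \<in> K" and aff: "\<forall>y\<in>K. r y = w \<bullet> y + d"
    and D: "(r has_derivative D) (at x)"
  shows "D (v - x) = w \<bullet> (v - x)"
proof -
  define \<gamma> where "\<gamma> = (\<lambda>s::real. x + s *\<^sub>R (v - x))"
  have \<gamma>d: "(\<gamma> has_vector_derivative (v - x)) (at 0 within {0..1})"
    unfolding \<gamma>_def by (auto intro!: derivative_eq_intros)
  have D': "(r has_derivative D) (at (\<gamma> 0) within \<gamma> ` {0..1})"
    using D unfolding \<gamma>_def by (auto intro: has_derivative_at_withinI)
  have c1: "((r \<circ> \<gamma>) has_vector_derivative D (v - x)) (at 0 within {0..1})"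
    by (rule vector_derivative_diff_chain_within[OF \<gamma>d D'])
  have c2: "((\<lambda>s. r x + s * (w \<bullet> (v - x))) has_vector_derivative (w \<bullet> (v - x))) (at 0 within {0..1})"
    by (auto intro!: derivative_eq_intros simp: has_real_derivative_iff_has_vector_derivative[symmetric])
  have eq: "(r \<circ> \<gamma>) s = r x + s * (w \<bullet> (v - x))" if "s \<in> {0..1}" for s
  proof -
    have "\<gamma> s = (1 - s) *\<^sub>R x + s *\<^sub>R v" unfolding \<gamma>_def by (simp add: algebra_simps)
    also have "\<dots> \<in> K" using that K by (intro convexD) auto
    finally have "r (\<gamma> s) = w \<bullet> \<gamma> s + d" using aff by auto
    moreover have "r x = w \<bullet> x + d" using aff K by auto
    ultimately show ?thesis unfolding \<gamma>_def by (simp add: inner_add_right inner_diff_right)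
  qed
  have c1': "((\<lambda>s. r x + s * (w \<bullet> (v - x))) has_vector_derivative D (v - x)) (at 0 within {0..1})"
    by (rule has_vector_derivative_transform_within[OF c1, of 1]) (use eq in auto)
  show ?thesis
    using vector_derivative_unique_within_closed_interval[of 0 1 0 "\<lambda>s. r x + s * (w \<bullet> (v - x))"]
      c1' c2 by (simp add: cbox_interval)
qed

lemma tri_deriv:
  fixes r :: "pt \<Rightarrow> real"
  assumes nc: "\<not> collinear {a, b, c}" and x: "x \<in> convex hull {a, b, c}"
    and aff: "\<forall>y\<in>convex hull {a, b, c}. r y = w \<bullet> y + d"
    and D: "(r has_derivative D) (at x)"
  shows "D = (\<lambda>h. w \<bullet> h)"
proof -
  have lin: "linear D" using D by (rule has_derivative_linear)
  have cv: "convex (convex hull {a, b, c})" by (rule convex_convex_hull)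
  have "a \<in> convex hull {a,b,c}" "b \<in> convex hull {a,b,c}" "c \<in> convex hull {a,b,c}"
    by (auto intro: hull_inc)
  then have da: "D (a - x) = w \<bullet> (a - x)" and db: "D (b - x) = w \<bullet> (b - x)"
    and dc: "D (c - x) = w \<bullet> (c - x)"
    using dir_deriv[OF cv x _ aff D] by auto
  have dba: "D (b - a) = w \<bullet> (b - a)"
  proof -
    have "b - a = (b - x) - (a - x)" by simp
    then have "D (b - a) = D (b - x) - D (a - x)" using linear_diff[OF lin] by metis
    then show ?thesis using da db by (simp add: inner_diff_right)
  qed
  have dca: "D (c - a) = w \<bullet> (c - a)"
  proof -
    have "c - a = (c - x) - (a - x)" by simp
    then have "D (c - a) = D (c - x) - D (a - x)" using linear_diff[OF lin] by metis
    then show ?thesis using da dc by (simp add: inner_diff_right)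
  qed
  have cr: "cross2 (b - a) (c - a) \<noteq> 0" by (rule cross_nz[OF nc])
  show ?thesis
  proof
    fix h
    define \<alpha> where "\<alpha> = cross2 h (c - a) / cross2 (b - a) (c - a)"
    define \<beta> where "\<beta> = cross2 (b - a) h / cross2 (b - a) (c - a)"
    have hh: "h = \<alpha> *\<^sub>R (b - a) + \<beta> *\<^sub>R (c - a)" unfolding \<alpha>_def \<beta>_def by (rule cramer[OF cr])
    have "D h = \<alpha> * D (b - a) + \<beta> * D (c - a)"
      by (subst hh) (simp add: linear_add[OF lin] linear_scale[OF lin])
    also have "\<dots> = w \<bullet> h"
    proof -
      have "w \<bullet> h = \<alpha> * (w \<bullet> (b - a)) + \<beta> * (w \<bullet> (c - a))"
        by (subst hh) (simp add: inner_add_right)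
      then show ?thesis using dba dca by simp
    qed
    finally show "D h = w \<bullet> h" .
  qed
qed

definition Wt :: "(pt \<Rightarrow> real) \<Rightarrow> pt \<times> pt \<times> pt \<Rightarrow> pt" where
  "Wt r t = (SOME w. \<exists>d. \<forall>x\<in>tri t. r x = w \<bullet> x + d)"

definition Tx :: "(pt \<times> pt \<times> pt) set \<Rightarrow> pt \<Rightarrow> (pt \<times> pt \<times> pt) set" where
  "Tx Tr x = {t\<in>Tr. x \<in> tri t}"

definition Phi :: "(pt \<Rightarrow> real) \<Rightarrow> 2 \<Rightarrow> (pt \<times> pt \<times> pt) set \<Rightarrow> real" where
  "Phi r i S = (if \<forall>t\<in>S. \<forall>t'\<in>S. Wt r t = Wt r t' then Wt r (SOME t. t \<in> S) $ i else 0)"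

lemma Wt_prop: "P1_on t r \<Longrightarrow> \<exists>d. \<forall>x\<in>tri t. r x = Wt r t \<bullet> x + d"
  unfolding P1_on_def Wt_def by (rule someI_ex)

lemma deriv_char1:
  assumes tr: "fe_triangulation \<Omega> Tr" and p1: "\<forall>t\<in>Tr. P1_on t r"
    and D: "(r has_derivative D) (at x)" and t: "t \<in> Tr" "x \<in> tri t"
  shows "D = (\<lambda>h. Wt r t \<bullet> h)"
proof -
  obtain a b c where abc: "t = (a, b, c)" by (cases t) auto
  have nc: "\<not> collinear {a, b, c}" using tr t abc unfolding fe_triangulation_def tverts_def by auto
  obtain d where aff: "\<forall>y\<in>tri t. r y = Wt r t \<bullet> y + d" using Wt_prop p1 t by blast
  show ?thesis
    by (rule tri_deriv[OF nc _ _ D, of _ d]) (use t aff abc in \<open>auto simp: tri_def\<close>)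
qed

lemma closed_tri: "closed (tri t)"
  by (cases t) (auto simp: tri_def intro!: compact_imp_closed finite_imp_compact_convex_hull)

lemma deriv_char2:
  assumes op: "open \<Omega>" and tr: "fe_triangulation \<Omega> Tr" and p1: "\<forall>t\<in>Tr. P1_on t r"
    and x: "x \<in> \<Omega>" and W: "\<forall>t\<in>Tx Tr x. Wt r t = w"
  shows "(r has_derivative (\<lambda>h. w \<bullet> h)) (at x)"
proof -
  define Op where "Op = \<Omega> - (\<Union>t\<in>Tr - Tx Tr x. tri t)"
  have fin: "finite Tr" using tr unfolding fe_triangulation_def by auto
  have op2: "open Op" unfolding Op_def
    by (intro open_Diff op closed_UN) (use fin closed_tri in auto)
  have xo: "x \<in> Op" using x unfolding Op_def Tx_def by auto
  have eqs: "r x + w \<bullet> (y - x) = r y" if y: "y \<in> Op" for y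
  proof -
    have "y \<in> closure \<Omega>" using y closure_subset unfolding Op_def by auto
    then have "y \<in> (\<Union>t\<in>Tr. tri t)" using tr unfolding fe_triangulation_def by auto
    then obtain t where t: "t \<in> Tr" "y \<in> tri t" by blast
    then have tx: "t \<in> Tx Tr x" using y unfolding Op_def Tx_def by auto
    then have "x \<in> tri t" unfolding Tx_def by auto
    obtain d where aff: "\<forall>z\<in>tri t. r z = Wt r t \<bullet> z + d" using Wt_prop p1 t by blast
    have "Wt r t = w" using W tx by auto
    then show ?thesis using aff t \<open>x \<in> tri t\<close> by (simp add: inner_diff_right)
  qed
  have der: "((\<lambda>y. r x + w \<bullet> (y - x)) has_derivative (\<lambda>h. w \<bullet> h)) (at x)"
    by (auto intro!: derivative_eq_intros)
  show ?thesis by (rule has_derivative_transform_within_open[OF der op2 xo eqs])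
qed

lemma pd_char:
  assumes op: "open \<Omega>" and tr: "fe_triangulation \<Omega> Tr" and p1: "\<forall>t\<in>Tr. P1_on t r"
    and x: "x \<in> \<Omega>"
  shows "pd i r x = Phi r i (Tx Tr x)"
proof -
  have "x \<in> closure \<Omega>" using x closure_subset by auto
  then have "x \<in> (\<Union>t\<in>Tr. tri t)" using tr unfolding fe_triangulation_def by auto
  then obtain t0 where t0: "t0 \<in> Tr" "x \<in> tri t0" by blast
  then have ne: "t0 \<in> Tx Tr x" unfolding Tx_def by auto
  show ?thesis
  proof (cases "\<forall>t\<in>Tx Tr x. \<forall>t'\<in>Tx Tr x. Wt r t = Wt r t'")
    case True
    define s where "s = (SOME t. t \<in> Tx Tr x)"
    have s: "s \<in> Tx Tr x" unfolding s_def using ne by (rule someI)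
    have W: "\<forall>t\<in>Tx Tr x. Wt r t = Wt r s" using True s by blast
    have D: "(r has_derivative (\<lambda>h. Wt r s \<bullet> h)) (at x)"
      by (rule deriv_char2[OF op tr p1 x W])
    then have "r differentiable (at x)" unfolding differentiable_def by blast
    moreover have "frechet_derivative r (at x) = (\<lambda>h. Wt r s \<bullet> h)"
      using frechet_derivative_at[OF D] by (rule sym)
    ultimately have "pd i r x = Wt r s $ i" unfolding pd_def by (simp add: inner_axis)
    moreover have "Phi r i (Tx Tr x) = Wt r s $ i"
      unfolding Phi_def s_def by (subst if_P[OF True]) (rule refl)
    ultimately show ?thesis by simp
  next
    case False
    have "\<not> r differentiable (at x)"
    proof
      assume "r differentiable (at x)"
      then obtain D where D: "(r has_derivative D) (at x)" unfolding differentiable_def by blast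
      have "Wt r t = Wt r t'" if "t \<in> Tx Tr x" "t' \<in> Tx Tr x" for t t'
      proof -
        have "D = (\<lambda>h. Wt r t \<bullet> h)" "D = (\<lambda>h. Wt r t' \<bullet> h)"
          using deriv_char1[OF tr p1 D] that unfolding Tx_def by auto
        then have "\<forall>h. Wt r t \<bullet> h = Wt r t' \<bullet> h" by metis
        then have "Wt r t \<bullet> (Wt r t - Wt r t') = Wt r t' \<bullet> (Wt r t - Wt r t')" by blast
        then have "(Wt r t - Wt r t') \<bullet> (Wt r t - Wt r t') = 0"
          by (simp only: inner_diff_left)
        then show ?thesis by simp
      qed
      then show False using False by blast
    qed
    then show ?thesis unfolding pd_def Phi_def by (subst if_not_P[OF False]) simp
  qed
qed


lemma Tx_measurable:
  assumes fin: "finite Tr"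
  shows "Tx Tr \<in> measurable lborel (count_space (Pow Tr))"
proof -
  have "{x\<in>space lborel. \<forall>t\<in>Tr. (x \<in> tri t) = (t \<in> S)} \<in> sets lborel" for S
  proof (rule sets.sets_Collect_finite_All[OF _ fin])
    fix t assume "t \<in> Tr"
    have "{x\<in>space lborel. (x \<in> tri t) = (t \<in> S)} = (if t \<in> S then tri t else - tri t)"
      by auto
    moreover have "tri t \<in> sets lborel" using closed_tri by (simp add: borel_closed)
    ultimately show "{x\<in>space lborel. (x \<in> tri t) = (t \<in> S)} \<in> sets lborel" by auto
  qed
  moreover have "Tx Tr -` {S} \<inter> space lborel = {x\<in>space lborel. \<forall>t\<in>Tr. (x \<in> tri t) = (t \<in> S)}"
    if "S \<in> Pow Tr" for S
    using that unfolding Tx_def by auto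
  ultimately show ?thesis
    by (subst measurable_count_space_eq2) (auto simp: Tx_def fin)
qed

lemma pd_good:
  assumes op: "open \<Omega>" and tr: "fe_triangulation \<Omega> Tr" and p1: "\<forall>t\<in>Tr. P1_on t r"
  shows "good \<Omega> (pd i r)"
proof -
  have fin: "finite Tr" using tr unfolding fe_triangulation_def by auto
  have eq: "(\<lambda>x. indicator \<Omega> x *\<^sub>R pd i r x) = (\<lambda>x. indicator \<Omega> x *\<^sub>R (Phi r i \<circ> Tx Tr) x)"
    using pd_char[OF op tr p1] by (auto simp: indicator_def)
  have m1: "Phi r i \<circ> Tx Tr \<in> borel_measurable lborel"
    by (rule measurable_comp[OF Tx_measurable[OF fin]]) simp
  have om: "\<Omega> \<in> sets lborel" using op by simp
  have m: "set_borel_measurable lborel \<Omega> (pd i r)"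
    unfolding set_borel_measurable_def eq using m1 om
    by (intro borel_measurable_scaleR borel_measurable_indicator) (auto simp: o_def)
  have "\<bar>pd i r x\<bar> \<le> (\<Sum>S\<in>Pow Tr. \<bar>Phi r i S\<bar>)" if "x \<in> \<Omega>" for x
  proof -
    have "\<bar>pd i r x\<bar> = \<bar>Phi r i (Tx Tr x)\<bar>" using pd_char[OF op tr p1 that] by simp
    also have "\<dots> \<le> (\<Sum>S\<in>Pow Tr. \<bar>Phi r i S\<bar>)"
      by (rule member_le_sum[where f="\<lambda>S. \<bar>Phi r i S\<bar>"]) (auto simp: Tx_def fin)
    finally show ?thesis .
  qed
  then show ?thesis unfolding good_def using m by blast
qed

lemma measure_pos:
  assumes op: "open \<Omega>" and bd: "bounded \<Omega>" and ne: "\<Omega> \<noteq> {}"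
  shows "0 < measure lborel \<Omega>"
proof -
  obtain x where x: "x \<in> \<Omega>" using ne by auto
  obtain e where e: "e > 0" "ball x e \<subseteq> \<Omega>" using op x open_contains_ball by blast
  have "0 < measure lborel (ball x e)" using content_ball_pos[OF e(1)] by simp
  also have "\<dots> \<le> measure lborel \<Omega>"
    by (rule measure_mono_fmeasurable[OF e(2)])
       (use op bd emeasure_bounded_finite in \<open>auto simp: fmeasurable_def\<close>)
  finally show ?thesis .
qed

lemma cont_good:
  assumes op: "open \<Omega>" and bd: "bounded \<Omega>" and c: "continuous_on (closure \<Omega>) h"
  shows "good \<Omega> (h :: pt \<Rightarrow> real)"
proof -
  have m: "set_borel_measurable lborel \<Omega> h"
    unfolding set_borel_measurable_def
    using borel_measurable_continuous_on_indicator[of \<Omega> h] op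
      continuous_on_subset[OF c closure_subset] by simp
  have "compact (closure \<Omega>)" using bd by (simp add: compact_closure)
  then have "compact (h ` closure \<Omega>)" using c by (metis compact_continuous_image)
  then obtain B where "\<forall>y\<in>h ` closure \<Omega>. norm y \<le> B"
    using compact_imp_bounded bounded_iff by metis
  then have "\<forall>x\<in>\<Omega>. \<bar>h x\<bar> \<le> B" using closure_subset by fastforce
  then show ?thesis unfolding good_def using m by blast
qed

definition vgood :: "pt set \<Rightarrow> (pt \<Rightarrow> pt) \<Rightarrow> bool" where
  "vgood \<Omega> u \<longleftrightarrow> (\<forall>i. good \<Omega> (vcomp u i))"

lemma inner_pt: "(a::pt) \<bullet> b = a $ 1 * b $ 1 + a $ 2 * b $ 2"
  by (simp add: inner_vec_def sum_2)

lemma vgood_inner: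
  assumes "vgood \<Omega> u" "vgood \<Omega> v"
  shows "good \<Omega> (\<lambda>x. u x \<bullet> v x)"
proof -
  have "good \<Omega> (\<lambda>x. vcomp u 1 x * vcomp v 1 x + vcomp u 2 x * vcomp v 2 x)"
    using assms unfolding vgood_def by (intro good_add good_mult) auto
  then show ?thesis by (simp add: inner_pt vcomp_def)
qed

lemma vgood_lin:
  assumes om: "\<Omega> \<in> sets lborel" and "vgood \<Omega> u" "vgood \<Omega> v"
  shows "vgood \<Omega> (\<lambda>x. a *\<^sub>R u x + b *\<^sub>R v x)"
proof -
  have "good \<Omega> (\<lambda>x. a * vcomp u i x + b * vcomp v i x)" for i
    using assms unfolding vgood_def by (intro good_add good_cmult) auto
  then show ?thesis unfolding vgood_def vcomp_def by simp
qed

lemma Vh_vgood: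
  assumes "open \<Omega>" "bounded \<Omega>" "v \<in> Vh \<Omega> Tr"
  shows "vgood \<Omega> v"
proof -
  have c: "continuous_on (closure \<Omega>) v" using assms unfolding Vh_def by auto
  have "continuous_on (closure \<Omega>) (vcomp v i)" for i
    unfolding vcomp_def by (intro continuous_intros c)
  then show ?thesis unfolding vgood_def using cont_good assms by blast
qed

lemma Hh_good:
  assumes "open \<Omega>" "bounded \<Omega>" "r \<in> Hh \<Omega> Tr"
  shows "good \<Omega> r"
  using assms cont_good unfolding Hh_def by blast

lemma bary_cc:
  fixes a b c :: pt
  assumes cr: "cross2 (b - a) (c - a) \<noteq> 0" and x: "x = u *\<^sub>R a + v *\<^sub>R b + z *\<^sub>R c" and s: "u + v + z = 1"
  shows "bary a b c x = u" "bary b c a x = v" "bary c a b x = z"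
proof -
  have z: "z = 1 - u - v" using s by simp
  have x1: "x $ 1 = u * a $ 1 + v * b $ 1 + z * c $ 1" and x2: "x $ 2 = u * a $ 2 + v * b $ 2 + z * c $ 2"
    using x by simp_all
  have e1: "cross2 (b - x) (c - x) = u * cross2 (b - a) (c - a)"
    by (simp add: cross2_def x1 x2 z algebra_simps)
  have e2: "cross2 (c - x) (a - x) = v * cross2 (b - a) (c - a)"
    by (simp add: cross2_def x1 x2 z algebra_simps)
  have e3: "cross2 (a - x) (b - x) = z * cross2 (b - a) (c - a)"
    by (simp add: cross2_def x1 x2 z algebra_simps)
  have f2: "cross2 (c - b) (a - b) = cross2 (b - a) (c - a)"
    unfolding cross2_def by (simp add: algebra_simps)
  have f3: "cross2 (a - c) (b - c) = cross2 (b - a) (c - a)"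
    unfolding cross2_def by (simp add: algebra_simps)
  show "bary a b c x = u" "bary b c a x = v" "bary c a b x = z"
    unfolding bary_def using e1 e2 e3 f2 f3 cr by simp_all
qed

lemma p1_interp_bound:
  assumes tr: "fe_triangulation \<Omega> Tr" and B: "\<forall>y\<in>closure \<Omega>. \<bar>w y\<bar> \<le> B"
    and x: "x \<in> closure \<Omega>"
  shows "\<bar>p1_interp Tr w x\<bar> \<le> B"
proof -
  have ex: "\<exists>t\<in>Tr. x \<in> tri t" using tr x unfolding fe_triangulation_def by auto
  define t where "t = (SOME t. t \<in> Tr \<and> x \<in> tri t)"
  have t: "t \<in> Tr \<and> x \<in> tri t" unfolding t_def using ex by (metis (mono_tags, lifting) someI_ex)
  obtain a b c where abc: "t = (a, b, c)" by (cases t) auto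
  have nc: "\<not> collinear {a, b, c}" using tr t abc unfolding fe_triangulation_def tverts_def by auto
  have cr: "cross2 (b - a) (c - a) \<noteq> 0" by (rule cross_nz[OF nc])
  have sub: "tri t \<subseteq> closure \<Omega>" using tr t unfolding fe_triangulation_def by auto
  have "a \<in> tri t" "b \<in> tri t" "c \<in> tri t" unfolding abc tri_def by (auto intro: hull_inc)
  then have Ba: "\<bar>w a\<bar> \<le> B" "\<bar>w b\<bar> \<le> B" "\<bar>w c\<bar> \<le> B" using sub B by auto
  obtain u v z where uvz: "0 \<le> u" "0 \<le> v" "0 \<le> z" "u + v + z = 1" "x = u *\<^sub>R a + v *\<^sub>R b + z *\<^sub>R c"
    using t unfolding abc tri_def convex_hull_3 by auto
  note bb = bary_cc[OF cr uvz(5) uvz(4)]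
  have val: "p1_interp Tr w x = w a * u + w b * v + w c * z"
  proof -
    have st: "(SOME t. t \<in> Tr \<and> x \<in> tri t) = (a, b, c)" using abc t_def by simp
    show ?thesis unfolding p1_interp_def using ex by (simp add: st bb)
  qed
  have "\<bar>w a * u + w b * v + w c * z\<bar> \<le> B * u + B * v + B * z"
  proof -
    have "\<bar>w a * u\<bar> \<le> B * u" "\<bar>w b * v\<bar> \<le> B * v" "\<bar>w c * z\<bar> \<le> B * z"
      using Ba uvz by (auto simp: abs_mult intro: mult_right_mono)
    then show ?thesis by linarith
  qed
  also have "\<dots> = B" using uvz(4) by (simp add: algebra_simps) (metis distrib_left mult.right_neutral)
  finally show ?thesis using val by simp
qed

lemma int_le_const:
  assumes fin: "emeasure lborel \<Omega> < \<infinity>" and om: "\<Omega> \<in> sets lborel"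
    and g: "set_integrable lborel \<Omega> f" and K: "\<And>x. x \<in> \<Omega> \<Longrightarrow> f x \<le> K"
  shows "(LINT x:\<Omega>|lborel. f x) \<le> K * measure lborel \<Omega>"
proof -
  have ci: "set_integrable lborel \<Omega> (\<lambda>x. K)"
    unfolding set_integrable_def using fin om
    by (intro integrable_scaleR_left integrable_real_indicator) auto
  have "(LINT x:\<Omega>|lborel. f x) \<le> (LINT x:\<Omega>|lborel. K)"
    by (rule set_integral_mono[OF g ci K])
  also have "\<dots> = K * measure lborel \<Omega>" using fin om by (simp add: set_integral_const)
  finally show ?thesis .
qed

lemma Ih_bound:
  assumes tr: "fe_triangulation \<Omega> Tr" and B: "\<forall>y\<in>closure \<Omega>. \<forall>i. \<bar>u0 y $ i\<bar> \<le> B"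
    and x: "x \<in> closure \<Omega>"
  shows "Ih Tr u0 x \<bullet> Ih Tr u0 x \<le> 2 * B\<^sup>2"
proof -
  have b: "\<bar>Ih Tr u0 x $ i\<bar> \<le> B" for i
    unfolding Ih_def using p1_interp_bound[OF tr _ x, of "vcomp u0 i" B] B
    by (simp add: vcomp_def)
  have sq: "(Ih Tr u0 x $ i)^2 \<le> B^2" for i
  proof -
    have "\<bar>Ih Tr u0 x $ i\<bar>^2 \<le> B^2" by (rule power_mono[OF b abs_ge_zero])
    then show ?thesis by simp
  qed
  have "Ih Tr u0 x \<bullet> Ih Tr u0 x = (Ih Tr u0 x $ 1)^2 + (Ih Tr u0 x $ 2)^2"
    unfolding inner_pt by (simp add: power2_eq_square)
  then show ?thesis using sq[of 1] sq[of 2] by linarith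
qed

lemma Pih_bound:
  assumes tr: "fe_triangulation \<Omega> Tr" and fin: "emeasure lborel \<Omega> < \<infinity>" and om: "\<Omega> \<in> sets lborel"
    and mp: "0 < measure lborel \<Omega>"
    and B: "\<forall>y\<in>closure \<Omega>. \<bar>c0 y\<bar> \<le> B" and x: "x \<in> closure \<Omega>"
  shows "\<bar>Pih \<Omega> Tr c0 x\<bar> \<le> 2 * B"
proof -
  have p: "\<bar>p1_interp Tr c0 y\<bar> \<le> B" if "y \<in> closure \<Omega>" for y
    by (rule p1_interp_bound[OF tr B that])
  have ci: "set_integrable lborel \<Omega> (\<lambda>x. B)"
    unfolding set_integrable_def using fin om
    by (intro integrable_scaleR_left integrable_real_indicator) auto
  have "\<bar>LINT y:\<Omega>|lborel. p1_interp Tr c0 y\<bar> \<le> (LINT y:\<Omega>|lborel. B)"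
    by (rule set_integral_abs_bound[OF ci]) (use p closure_subset in auto)
  also have "\<dots> = B * measure lborel \<Omega>" using fin om by (simp add: set_integral_const)
  finally have "\<bar>(LINT y:\<Omega>|lborel. p1_interp Tr c0 y) / measure lborel \<Omega>\<bar> \<le> B"
    using mp by (simp add: field_simps)
  then show ?thesis unfolding Pih_def using p[OF x] by linarith
qed



lemma nrm2_nonneg: "0 \<le> nrm2 \<Omega> f"
  unfolding nrm2_def ip_def by (rule set_integral_nonneg') simp

lemma nrm2v_nonneg: "0 \<le> nrm2v \<Omega> f"
  unfolding nrm2v_def ipv_def by (rule set_integral_nonneg') simp

lemma gnrm2_nonneg: "0 \<le> gnrm2 \<Omega> f"
  unfolding gnrm2_def grad_ip_def by (rule set_integral_nonneg') simp

lemma gnrm2v_nonneg: "0 \<le> gnrm2v \<Omega> f"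
  unfolding gnrm2v_def wgrad_v_def by (rule set_integral_nonneg') (simp add: sum_nonneg)

lemma sq_int:
  assumes fin: "emeasure lborel \<Omega> < \<infinity>" and om: "\<Omega> \<in> sets lborel" and g: "good \<Omega> f"
  shows "set_integrable lborel \<Omega> (\<lambda>x. f x * f x)"
  by (rule good_integrable[OF fin om good_mult[OF g g]])

lemma vsq_int:
  assumes fin: "emeasure lborel \<Omega> < \<infinity>" and om: "\<Omega> \<in> sets lborel" and g: "vgood \<Omega> f"
  shows "set_integrable lborel \<Omega> (\<lambda>x. f x \<bullet> f x)"
  by (rule good_integrable[OF fin om vgood_inner[OF g g]])

lemma vgood3:
  assumes om: "\<Omega> \<in> sets lborel" and "vgood \<Omega> a" "vgood \<Omega> b" "vgood \<Omega> e"
  shows "vgood \<Omega> (\<lambda>x. p *\<^sub>R a x + q *\<^sub>R b x + s *\<^sub>R e x)"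
proof -
  have "vgood \<Omega> (\<lambda>x. 1 *\<^sub>R (p *\<^sub>R a x + q *\<^sub>R b x) + s *\<^sub>R e x)"
    by (intro vgood_lin assms)
  then show ?thesis by simp
qed

lemma good3:
  assumes om: "\<Omega> \<in> sets lborel" and "good \<Omega> a" "good \<Omega> b" "good \<Omega> e"
  shows "good \<Omega> (\<lambda>x. p * a x + q * b x + s * e x)"
  by (intro good_add good_cmult assms)

lemma lint5:
  fixes f1 f2 f3 f4 f5 :: "pt \<Rightarrow> real"
  assumes "set_integrable lborel \<Omega> f1" "set_integrable lborel \<Omega> f2" "set_integrable lborel \<Omega> f3"
    "set_integrable lborel \<Omega> f4" "set_integrable lborel \<Omega> f5"
  shows "(LINT x:\<Omega>|lborel. k * (f1 x + f2 x - f3 x - f4 x + f5 x)) =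
    k * ((LINT x:\<Omega>|lborel. f1 x) + (LINT x:\<Omega>|lborel. f2 x) - (LINT x:\<Omega>|lborel. f3 x)
       - (LINT x:\<Omega>|lborel. f4 x) + (LINT x:\<Omega>|lborel. f5 x))"
  using assms by simp

lemma lint3:
  fixes f1 f2 f3 :: "pt \<Rightarrow> real"
  assumes "set_integrable lborel \<Omega> f1" "set_integrable lborel \<Omega> f2" "set_integrable lborel \<Omega> f3"
  shows "(LINT x:\<Omega>|lborel. k * (f1 x - f2 x + f3 x)) =
    k * ((LINT x:\<Omega>|lborel. f1 x) - (LINT x:\<Omega>|lborel. f2 x) + (LINT x:\<Omega>|lborel. f3 x))"
  using assms by simp

lemma bdf_scalar:
  assumes fin: "emeasure lborel \<Omega> < \<infinity>" and om: "\<Omega> \<in> sets lborel"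
    and ga: "good \<Omega> a" and gb: "good \<Omega> b" and ge: "good \<Omega> e" and tau: "\<tau> > 0"
  shows "ip \<Omega> (\<lambda>x. (3 * a x - 4 * b x + e x) / (2 * \<tau>)) a =
    (1/(4*\<tau>)) * (nrm2 \<Omega> a + nrm2 \<Omega> (\<lambda>x. 2 * a x - b x) - nrm2 \<Omega> b
       - nrm2 \<Omega> (\<lambda>x. 2 * b x - e x) + nrm2 \<Omega> (\<lambda>x. a x - 2 * b x + e x))"
proof -
  have g1: "good \<Omega> (\<lambda>x. 2 * a x - b x)" using good3[OF om ga gb ge, of 2 "-1" 0] by simp
  have g2: "good \<Omega> (\<lambda>x. 2 * b x - e x)" using good3[OF om ga gb ge, of 0 2 "-1"] by simp
  have g3: "good \<Omega> (\<lambda>x. a x - 2 * b x + e x)" using good3[OF om ga gb ge, of 1 "-2" 1] by simp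
  have pt: "(3 * a x - 4 * b x + e x) / (2 * \<tau>) * a x = (1/(4*\<tau>)) * (a x * a x + (2 * a x - b x) * (2 * a x - b x)
     - b x * b x - (2 * b x - e x) * (2 * b x - e x) + (a x - 2 * b x + e x) * (a x - 2 * b x + e x))" for x
    using tau by (simp add: field_simps; simp add: algebra_simps)
  show ?thesis
    unfolding ip_def nrm2_def pt
    by (rule lint5) (intro sq_int[OF fin om] ga gb g1 g2 g3)+
qed

lemma bdf_vec:
  assumes fin: "emeasure lborel \<Omega> < \<infinity>" and om: "\<Omega> \<in> sets lborel"
    and ga: "vgood \<Omega> a" and gb: "vgood \<Omega> b" and ge: "vgood \<Omega> e" and tau: "\<tau> > 0"
  shows "ipv \<Omega> (\<lambda>x. (1 / (2 * \<tau>)) *\<^sub>R (3 *\<^sub>R a x - 4 *\<^sub>R b x + e x)) a =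
    (1/(4*\<tau>)) * (nrm2v \<Omega> a + nrm2v \<Omega> (\<lambda>x. 2 *\<^sub>R a x - b x) - nrm2v \<Omega> b
       - nrm2v \<Omega> (\<lambda>x. 2 *\<^sub>R b x - e x) + nrm2v \<Omega> (\<lambda>x. a x - 2 *\<^sub>R b x + e x))"
proof -
  have g1: "vgood \<Omega> (\<lambda>x. 2 *\<^sub>R a x - b x)" using vgood3[OF om ga gb ge, of 2 "-1" 0] by simp
  have g2: "vgood \<Omega> (\<lambda>x. 2 *\<^sub>R b x - e x)" using vgood3[OF om ga gb ge, of 0 2 "-1"] by simp
  have g3: "vgood \<Omega> (\<lambda>x. a x - 2 *\<^sub>R b x + e x)" using vgood3[OF om ga gb ge, of 1 "-2" 1] by simp
  have pt: "(1 / (2 * \<tau>)) *\<^sub>R (3 *\<^sub>R a x - 4 *\<^sub>R b x + e x) \<bullet> a x = (1/(4*\<tau>)) * (a x \<bullet> a x + (2 *\<^sub>R a x - b x) \<bullet> (2 *\<^sub>R a x - b x)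
     - b x \<bullet> b x - (2 *\<^sub>R b x - e x) \<bullet> (2 *\<^sub>R b x - e x) + (a x - 2 *\<^sub>R b x + e x) \<bullet> (a x - 2 *\<^sub>R b x + e x))" for x
    using tau unfolding inner_pt by (simp add: field_simps; simp add: algebra_simps)
  show ?thesis
    unfolding ipv_def nrm2v_def pt
    by (rule lint5) (intro vsq_int[OF fin om] ga gb g1 g2 g3)+
qed

lemma euler_scalar:
  assumes fin: "emeasure lborel \<Omega> < \<infinity>" and om: "\<Omega> \<in> sets lborel"
    and ga: "good \<Omega> a" and gb: "good \<Omega> b" and tau: "\<tau> > 0"
  shows "ip \<Omega> (\<lambda>x. (a x - b x) / \<tau>) a =
    (1/(2*\<tau>)) * (nrm2 \<Omega> a - nrm2 \<Omega> b + nrm2 \<Omega> (\<lambda>x. a x - b x))"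
proof -
  have g1: "good \<Omega> (\<lambda>x. a x - b x)" using good_diff[OF om ga gb] .
  have pt: "(a x - b x) / \<tau> * a x = (1/(2*\<tau>)) * (a x * a x - b x * b x + (a x - b x) * (a x - b x))" for x
    using tau by (simp add: field_simps; simp add: algebra_simps)
  show ?thesis
    unfolding ip_def nrm2_def pt
    by (rule lint3) (intro sq_int[OF fin om] ga gb g1)+
qed

lemma euler_vec:
  assumes fin: "emeasure lborel \<Omega> < \<infinity>" and om: "\<Omega> \<in> sets lborel"
    and ga: "vgood \<Omega> a" and gb: "vgood \<Omega> b" and tau: "\<tau> > 0"
  shows "ipv \<Omega> (\<lambda>x. (1 / \<tau>) *\<^sub>R (a x - b x)) a =
    (1/(2*\<tau>)) * (nrm2v \<Omega> a - nrm2v \<Omega> b + nrm2v \<Omega> (\<lambda>x. a x - b x))"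
proof -
  have g1: "vgood \<Omega> (\<lambda>x. a x - b x)" using vgood3[OF om ga gb gb, of 1 "-1" 0] by simp
  have pt: "(1 / \<tau>) *\<^sub>R (a x - b x) \<bullet> a x = (1/(2*\<tau>)) * (a x \<bullet> a x - b x \<bullet> b x + (a x - b x) \<bullet> (a x - b x))" for x
    using tau unfolding inner_pt by (simp add: field_simps; simp add: algebra_simps)
  show ?thesis
    unfolding ipv_def nrm2v_def pt
    by (rule lint3) (intro vsq_int[OF fin om] ga gb g1)+
qed

lemma hat_scalar:
  assumes fin: "emeasure lborel \<Omega> < \<infinity>" and om: "\<Omega> \<in> sets lborel"
    and ga: "good \<Omega> a" and gb: "good \<Omega> b"
  shows "nrm2 \<Omega> (\<lambda>x. 2 * a x - b x) \<le> 8 * nrm2 \<Omega> a + 2 * nrm2 \<Omega> b"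
proof -
  have g1: "good \<Omega> (\<lambda>x. 2 * a x - b x)" using good3[OF om ga gb gb, of 2 "-1" 0] by simp
  have "nrm2 \<Omega> (\<lambda>x. 2 * a x - b x) \<le> (LINT x:\<Omega>|lborel. 8 * (a x * a x) + 2 * (b x * b x))"
    unfolding nrm2_def ip_def
  proof (rule set_integral_mono)
    fix x
    have "8 * (a x * a x) + 2 * (b x * b x) - (2 * a x - b x) * (2 * a x - b x) = (2 * a x + b x) * (2 * a x + b x)"
      by (simp add: algebra_simps)
    moreover have "0 \<le> (2 * a x + b x) * (2 * a x + b x)" by simp
    ultimately show "(2 * a x - b x) * (2 * a x - b x) \<le> 8 * (a x * a x) + 2 * (b x * b x)"
      by linarith
  next
    show "set_integrable lborel \<Omega> (\<lambda>x. (2 * a x - b x) * (2 * a x - b x))" by (rule sq_int[OF fin om g1])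
    show "set_integrable lborel \<Omega> (\<lambda>x. 8 * (a x * a x) + 2 * (b x * b x))"
      using sq_int[OF fin om ga] sq_int[OF fin om gb] by simp
  qed
  also have "\<dots> = 8 * nrm2 \<Omega> a + 2 * nrm2 \<Omega> b"
    unfolding nrm2_def ip_def using sq_int[OF fin om ga] sq_int[OF fin om gb] by simp
  finally show ?thesis .
qed

lemma hat_vec:
  assumes fin: "emeasure lborel \<Omega> < \<infinity>" and om: "\<Omega> \<in> sets lborel"
    and ga: "vgood \<Omega> a" and gb: "vgood \<Omega> b"
  shows "nrm2v \<Omega> (\<lambda>x. 2 *\<^sub>R a x - b x) \<le> 8 * nrm2v \<Omega> a + 2 * nrm2v \<Omega> b"
proof -
  have g1: "vgood \<Omega> (\<lambda>x. 2 *\<^sub>R a x - b x)" using vgood3[OF om ga gb gb, of 2 "-1" 0] by simp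
  have "nrm2v \<Omega> (\<lambda>x. 2 *\<^sub>R a x - b x) \<le> (LINT x:\<Omega>|lborel. 8 * (a x \<bullet> a x) + 2 * (b x \<bullet> b x))"
    unfolding nrm2v_def ipv_def
  proof (rule set_integral_mono)
    fix x
    have "0 \<le> (2 *\<^sub>R a x + b x) \<bullet> (2 *\<^sub>R a x + b x)" by simp
    then show "(2 *\<^sub>R a x - b x) \<bullet> (2 *\<^sub>R a x - b x) \<le> 8 * (a x \<bullet> a x) + 2 * (b x \<bullet> b x)"
      by (simp add: inner_add_left inner_add_right inner_diff_left inner_diff_right inner_commute)
  next
    show "set_integrable lborel \<Omega> (\<lambda>x. (2 *\<^sub>R a x - b x) \<bullet> (2 *\<^sub>R a x - b x))" by (rule vsq_int[OF fin om g1])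
    show "set_integrable lborel \<Omega> (\<lambda>x. 8 * (a x \<bullet> a x) + 2 * (b x \<bullet> b x))"
      using vsq_int[OF fin om ga] vsq_int[OF fin om gb] by simp
  qed
  also have "\<dots> = 8 * nrm2v \<Omega> a + 2 * nrm2v \<Omega> b"
    unfolding nrm2v_def ipv_def using vsq_int[OF fin om ga] vsq_int[OF fin om gb] by simp
  finally show ?thesis .
qed





lemma tele:
  fixes a b c :: "nat \<Rightarrow> real"
  assumes step: "\<And>n. 1 \<le> n \<Longrightarrow> n + 1 \<le> N \<Longrightarrow> a (n+1) + b (n+1) \<le> a n + c n"
  shows "1 \<le> m \<Longrightarrow> m \<le> N - 1 \<Longrightarrow> a (m+1) + (\<Sum>n = 1..m. b (n+1)) \<le> a 1 + (\<Sum>n = 1..m. c n)"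
proof (induction m rule: nat_induct_at_least)
  case base
  then show ?case using step[of 1] by simp
next
  case (Suc m)
  have "a (Suc m + 1) + b (Suc m + 1) \<le> a (Suc m) + c (Suc m)" using step[of "Suc m"] Suc by simp
  moreover have "a (m+1) + (\<Sum>n = 1..m. b (n+1)) \<le> a 1 + (\<Sum>n = 1..m. c n)" using Suc by simp
  ultimately show ?case by simp
qed

lemma gron:
  fixes a :: "nat \<Rightarrow> real"
  assumes tau: "\<tau> > 0" and K: "K \<ge> 0" and L: "L \<ge> 0" and a1: "0 \<le> a 1"
    and step: "\<And>n. 1 \<le> n \<Longrightarrow> n + 1 \<le> N \<Longrightarrow> a (n+1) \<le> (1 + \<tau> * K) * a n + \<tau> * L"
  shows "1 \<le> n \<Longrightarrow> n \<le> N \<Longrightarrow> a n \<le> exp (K * \<tau> * N) * (a 1 + \<tau> * N * L)"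
proof -
  have P: "a n \<le> (1 + \<tau> * K) ^ (n - 1) * (a 1 + \<tau> * real (n - 1) * L)" if "1 \<le> n" "n \<le> N" for n
    using that
  proof (induction n rule: nat_induct_at_least)
    case base
    then show ?case by simp
  next
    case (Suc n)
    have q: "1 \<le> 1 + \<tau> * K" using tau K by simp
    have q1: "1 \<le> (1 + \<tau> * K) ^ n" using q by simp
    have nn: "0 \<le> a 1 + \<tau> * real (n - 1) * L" using a1 tau L by simp
    have "a (Suc n) \<le> (1 + \<tau> * K) * a n + \<tau> * L" using step[of n] Suc by simp
    also have "\<dots> \<le> (1 + \<tau> * K) * ((1 + \<tau> * K) ^ (n - 1) * (a 1 + \<tau> * real (n - 1) * L)) + \<tau> * L"
      using Suc q by (intro add_right_mono mult_left_mono) auto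
    also have "\<dots> = (1 + \<tau> * K) ^ n * (a 1 + \<tau> * real (n - 1) * L) + \<tau> * L"
      using Suc(1) by (cases n) auto
    also have "\<dots> \<le> (1 + \<tau> * K) ^ n * (a 1 + \<tau> * real (n - 1) * L) + (1 + \<tau> * K) ^ n * (\<tau> * L)"
    proof -
      have "0 \<le> \<tau> * L" using tau L by simp
      then have "1 * (\<tau> * L) \<le> (1 + \<tau> * K) ^ n * (\<tau> * L)" by (rule mult_right_mono[OF q1])
      then show ?thesis by simp
    qed
    also have "\<dots> = (1 + \<tau> * K) ^ (Suc n - 1) * (a 1 + \<tau> * real (Suc n - 1) * L)"
      using Suc(1) by (simp add: algebra_simps of_nat_diff)
    finally show ?case .
  qed
  assume n: "1 \<le> n" "n \<le> N"
  have "(1 + \<tau> * K) ^ (n - 1) \<le> exp (\<tau> * K) ^ (n - 1)"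
    by (rule power_mono) (use tau K in \<open>auto simp: exp_ge_add_one_self\<close>)
  also have "\<dots> = exp (real (n - 1) * (\<tau> * K))" by (simp add: exp_of_nat_mult)
  also have "\<dots> \<le> exp (K * \<tau> * N)"
  proof -
    have "real (n - 1) \<le> real N" using n by simp
    then have "real (n - 1) * (\<tau> * K) \<le> real N * (\<tau> * K)" by (rule mult_right_mono) (use tau K in simp)
    then show ?thesis by (simp add: algebra_simps)
  qed
  finally have e: "(1 + \<tau> * K) ^ (n - 1) \<le> exp (K * \<tau> * N)" .
  have f: "a 1 + \<tau> * real (n - 1) * L \<le> a 1 + \<tau> * N * L"
    using n tau L by (simp add: mult_right_mono)
  have "a n \<le> (1 + \<tau> * K) ^ (n - 1) * (a 1 + \<tau> * real (n - 1) * L)" by (rule P[OF n])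
  also have "\<dots> \<le> exp (K * \<tau> * N) * (a 1 + \<tau> * N * L)"
    by (rule mult_mono[OF e f]) (use a1 tau L in auto)
  finally show ?thesis .
qed

locale bdfs =
  fixes \<Omega> :: "pt set" and \<nu> :: "real \<Rightarrow> real"
    and \<theta> U g \<gamma> \<alpha> k T M :: real
    and f :: "real \<Rightarrow> pt \<Rightarrow> pt" and u0 :: "pt \<Rightarrow> pt" and c0 :: "pt \<Rightarrow> real"
    and Tr :: "(pt \<times> pt \<times> pt) set" and N :: nat
    and u :: "nat \<Rightarrow> pt \<Rightarrow> pt" and p :: "nat \<Rightarrow> pt \<Rightarrow> real" and c :: "nat \<Rightarrow> pt \<Rightarrow> real"
    and \<tau> :: real
  assumes op: "open \<Omega>" and bd: "bounded \<Omega>" and ne: "\<Omega> \<noteq> {}"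
    and th: "\<theta> > 0" and Upos: "U > 0" and kge: "k \<ge> 1" and Tpos: "T > 0"
    and nu_cont: "continuous_on UNIV \<nu>"
    and nu_bounds: "\<forall>s. 1 / k \<le> \<nu> s \<and> \<nu> s \<le> k"
    and fL2: "\<forall>t\<in>{0..T}. (\<forall>i. L2 \<Omega> (vcomp (f t) i)) \<and> nrm2v \<Omega> (f t) \<le> M"
    and tr: "fe_triangulation \<Omega> Tr" and N1: "N \<ge> 1"
    and sol: "bdf2_solution \<Omega> \<nu> \<alpha> \<theta> U g \<gamma> f u0 c0 T Tr N u p c"
    and tau_def: "\<tau> = T / real N"
begin

lemma tau_pos: "\<tau> > 0" using Tpos N1 tau_def by simp

lemma tau_le: "\<tau> \<le> T"
proof -
  have "T / real N \<le> T / 1" using N1 Tpos by (intro divide_left_mono) auto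
  then show ?thesis using tau_def by simp
qed

lemma tauN: "\<tau> * real N = T" using N1 tau_def by simp

lemma om: "\<Omega> \<in> sets lborel" using op by simp
lemma fin: "emeasure lborel \<Omega> < \<infinity>" using bd by (rule emeasure_bounded_finite)
lemma Apos: "0 < measure lborel \<Omega>" using measure_pos[OF op bd ne] .

lemma s_mem: "n \<le> N \<Longrightarrow> u n \<in> Vh \<Omega> Tr \<and> c n \<in> Hh \<Omega> Tr"
  using sol unfolding bdf2_solution_def Let_def by blast

lemma s_p: "n \<in> {1..N} \<Longrightarrow> p n \<in> Mh \<Omega> Tr"
  using sol unfolding bdf2_solution_def Let_def by blast

lemma s_u0: "u 0 = Ih Tr u0" and s_c0: "c 0 = Pih \<Omega> Tr c0"
  using sol unfolding bdf2_solution_def Let_def by blast+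

lemma s_Iu: "\<forall>v\<in>Vh \<Omega> Tr. \<forall>q\<in>Mh \<Omega> Tr.
        ipv \<Omega> (\<lambda>x. (1 / \<tau>) *\<^sub>R (u 1 x - u 0 x)) v
        + wgrad_v \<Omega> (\<lambda>x. \<nu> (c 0 x + \<alpha>)) (u 1) v
        + Btri \<Omega> (u 0) (u 1) v
        - ip \<Omega> (pdiv v) (p 1) + ip \<Omega> (pdiv (u 1)) q
        = - g * ip \<Omega> (\<lambda>x. 1 + \<gamma> * c 0 x) (vcomp v 2) + ipv \<Omega> (f (1 * \<tau>)) v"
  using sol unfolding bdf2_solution_def Let_def tau_def by blast

lemma s_Ic: "\<forall>r\<in>Hh \<Omega> Tr.
        ip \<Omega> (\<lambda>x. (c 1 x - c 0 x) / \<tau>) r + \<theta> * grad_ip \<Omega> (c 1) r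
        + btri \<Omega> (u 0) (c 1) r - U * ip \<Omega> (c 0) (pd 2 r)
        = U * \<alpha> * ip \<Omega> (\<lambda>x. 1) (pd 2 r)"
  using sol unfolding bdf2_solution_def Let_def tau_def by blast

lemma s_II: "1 \<le> n \<Longrightarrow> n + 1 \<le> N \<Longrightarrow>
        (\<forall>v\<in>Vh \<Omega> Tr. \<forall>q\<in>Mh \<Omega> Tr.
          ipv \<Omega> (\<lambda>x. (1 / (2 * \<tau>)) *\<^sub>R (3 *\<^sub>R u (n + 1) x - 4 *\<^sub>R u n x + u (n - 1) x)) v
          + wgrad_v \<Omega> (\<lambda>x. \<nu> (hats c n x + \<alpha>)) (u (n + 1)) v
          + Btri \<Omega> (hatv u n) (u (n + 1)) v
          - ip \<Omega> (pdiv v) (p (n + 1)) + ip \<Omega> (pdiv (u (n + 1))) q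
          = - g * ip \<Omega> (\<lambda>x. 1 + \<gamma> * hats c n x) (vcomp v 2)
            + ipv \<Omega> (f (real (n + 1) * \<tau>)) v)
      \<and> (\<forall>r\<in>Hh \<Omega> Tr.
          ip \<Omega> (\<lambda>x. (3 * c (n + 1) x - 4 * c n x + c (n - 1) x) / (2 * \<tau>)) r
          + \<theta> * grad_ip \<Omega> (c (n + 1)) r
          + btri \<Omega> (hatv u n) (c (n + 1)) r - U * ip \<Omega> (hats c n) (pd 2 r)
          = U * \<alpha> * ip \<Omega> (\<lambda>x. 1) (pd 2 r))"
  using sol unfolding bdf2_solution_def Let_def tau_def by blast

lemma cgood: "n \<le> N \<Longrightarrow> good \<Omega> (c n)"
  using s_mem Hh_good[OF op bd] by blast

lemma ugood: "n \<le> N \<Longrightarrow> vgood \<Omega> (u n)"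
  using s_mem Vh_vgood[OF op bd] by blast

lemma pdgood: "n \<le> N \<Longrightarrow> good \<Omega> (pd i (c n))"
  using s_mem[of n] pd_good[OF op tr] unfolding Hh_def by blast

lemma P_le_G:
  assumes "n \<le> N"
  shows "nrm2 \<Omega> (pd 2 (c n)) \<le> gnrm2 \<Omega> (c n)"
proof -
  have g1: "good \<Omega> (pd 1 (c n))" and g2: "good \<Omega> (pd 2 (c n))" using pdgood assms by auto
  have eq: "pgrad (c n) x \<bullet> pgrad (c n) x = pd 1 (c n) x * pd 1 (c n) x + pd 2 (c n) x * pd 2 (c n) x" for x
    unfolding pgrad_def inner_pt by simp
  show ?thesis unfolding nrm2_def gnrm2_def ip_def grad_ip_def eq
  proof (rule set_integral_mono)
    show "set_integrable lborel \<Omega> (\<lambda>x. pd 2 (c n) x * pd 2 (c n) x)" by (rule sq_int[OF fin om g2])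
    show "set_integrable lborel \<Omega> (\<lambda>x. pd 1 (c n) x * pd 1 (c n) x + pd 2 (c n) x * pd 2 (c n) x)"
      using sq_int[OF fin om g1] sq_int[OF fin om g2] by simp
  qed simp
qed

lemma nrm2_one: "nrm2 \<Omega> (\<lambda>x. 1) = measure lborel \<Omega>"
  unfolding nrm2_def ip_def using fin om by (simp add: set_integral_const)

end

lemma alg_young1:
  fixes U \<theta> I Y P :: real
  assumes U: "U > 0" and th: "\<theta> > 0"
    and I: "\<bar>I\<bar> \<le> (1/(2*(\<theta>/(2*U)))) * Y + ((\<theta>/(2*U))/2) * P"
  shows "U * I \<le> (U^2/\<theta>) * Y + (\<theta>/4) * P"
proof -
  have "U * I \<le> U * \<bar>I\<bar>" by (rule mult_left_mono) (use U in auto)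
  also have "\<dots> \<le> U * ((1/(2*(\<theta>/(2*U)))) * Y + ((\<theta>/(2*U))/2) * P)"
    using U I by (simp add: mult_left_mono)
  also have "\<dots> = (U^2/\<theta>) * Y + (\<theta>/4) * P" using U th by (simp add: field_simps power2_eq_square)
  finally show ?thesis .
qed

lemma alg_young2:
  fixes U \<theta> I A P \<alpha> :: real
  assumes U: "U > 0" and th: "\<theta> > 0" and P: "P \<ge> 0"
    and I: "\<bar>I\<bar> \<le> (1/(2*(\<theta>/(2*U*(\<bar>\<alpha>\<bar>+1))))) * A + ((\<theta>/(2*U*(\<bar>\<alpha>\<bar>+1)))/2) * P"
  shows "U * \<alpha> * I \<le> (U^2*\<bar>\<alpha>\<bar>*(\<bar>\<alpha>\<bar>+1)/\<theta>) * A + (\<theta>/4) * P"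
proof -
  have a1: "\<bar>\<alpha>\<bar> + 1 > 0" by simp
  have "U * \<alpha> * I \<le> U * \<bar>\<alpha>\<bar> * \<bar>I\<bar>" using U by (simp add: abs_mult) (metis abs_ge_self abs_mult abs_of_pos mult.assoc)
  also have "\<dots> \<le> U * \<bar>\<alpha>\<bar> * ((1/(2*(\<theta>/(2*U*(\<bar>\<alpha>\<bar>+1))))) * A + ((\<theta>/(2*U*(\<bar>\<alpha>\<bar>+1)))/2) * P)"
    using U I by (intro mult_left_mono) auto
  also have "\<dots> = (U^2*\<bar>\<alpha>\<bar>*(\<bar>\<alpha>\<bar>+1)/\<theta>) * A + (\<theta>/4) * (\<bar>\<alpha>\<bar>/(\<bar>\<alpha>\<bar>+1)) * P"
  proof -
    have gen: "U * a * ((1/(2*(\<theta>/(2*U*(a+1))))) * A + ((\<theta>/(2*U*(a+1)))/2) * P)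
      = (U^2*a*(a+1)/\<theta>) * A + (\<theta>/4) * (a/(a+1)) * P" if "a \<ge> 0" for a :: real
    proof -
      have b: "a + 1 > 0" using that by simp
      define b where "b = a + 1"
      have a: "a = b - 1" unfolding b_def by simp
      have bp: "b > 0" using b unfolding b_def .
      show ?thesis unfolding a using U th bp by (simp add: field_simps power2_eq_square)
    qed
    show ?thesis by (rule gen) simp
  qed
  also have "\<dots> \<le> (U^2*\<bar>\<alpha>\<bar>*(\<bar>\<alpha>\<bar>+1)/\<theta>) * A + (\<theta>/4) * P"
  proof -
    have "\<bar>\<alpha>\<bar>/(\<bar>\<alpha>\<bar>+1) \<le> 1" by simp
    then have "(\<theta>/4) * (\<bar>\<alpha>\<bar>/(\<bar>\<alpha>\<bar>+1)) * P \<le> (\<theta>/4) * 1 * P"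
      using th P by (intro mult_right_mono mult_left_mono) auto
    then show ?thesis by simp
  qed
  finally show ?thesis .
qed

context bdfs begin

lemma c_step:
  assumes n: "1 \<le> n" "n + 1 \<le> N"
  shows "nrm2 \<Omega> (c (n+1)) + nrm2 \<Omega> (hats c (n+1)) + 2 * \<tau> * \<theta> * gnrm2 \<Omega> (c (n+1))
     \<le> nrm2 \<Omega> (c n) + nrm2 \<Omega> (hats c n) + \<tau> * (4 * U^2 / \<theta>) * nrm2 \<Omega> (hats c n)
        + \<tau> * (4 * U^2 * \<bar>\<alpha>\<bar> * (\<bar>\<alpha>\<bar>+1) / \<theta>) * measure lborel \<Omega>"
proof -
  have mem: "c (n+1) \<in> Hh \<Omega> Tr" using s_mem n by auto
  note eq0 = conjunct2[OF s_II[OF n], rule_format, OF mem]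
  have ga: "good \<Omega> (c (n+1))" and gb: "good \<Omega> (c n)" and ge: "good \<Omega> (c (n-1))"
    using cgood n by auto
  have gh: "good \<Omega> (hats c n)"
    using good3[OF om gb ge gb, of 2 "-1" 0] unfolding hats_def by simp
  have gp: "good \<Omega> (pd 2 (c (n+1)))" using pdgood n by auto
  have bt: "btri \<Omega> (hatv u n) (c (n + 1)) (c (n + 1)) = 0" unfolding btri_def by simp
  have hs1: "hats c (n+1) = (\<lambda>x. 2 * c (n+1) x - c n x)" unfolding hats_def by simp
  have hs0: "hats c n = (\<lambda>x. 2 * c n x - c (n-1) x)" unfolding hats_def by simp
  define Z where "Z = nrm2 \<Omega> (\<lambda>x. c (n+1) x - 2 * c n x + c (n-1) x)"
  have Z: "0 \<le> Z" unfolding Z_def by (rule nrm2_nonneg)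
  have bdf: "ip \<Omega> (\<lambda>x. (3 * c (n + 1) x - 4 * c n x + c (n - 1) x) / (2 * \<tau>)) (c (n+1))
     = (1/(4*\<tau>)) * (nrm2 \<Omega> (c (n+1)) + nrm2 \<Omega> (hats c (n+1)) - nrm2 \<Omega> (c n) - nrm2 \<Omega> (hats c n) + Z)"
    unfolding hs1 hs0 Z_def by (rule bdf_scalar[OF fin om ga gb ge tau_pos])
  define P where "P = nrm2 \<Omega> (pd 2 (c (n+1)))"
  have PG: "P \<le> gnrm2 \<Omega> (c (n+1))" unfolding P_def using P_le_G n by simp
  have P0: "0 \<le> P" unfolding P_def by (rule nrm2_nonneg)
  define I1 where "I1 = ip \<Omega> (hats c n) (pd 2 (c (n + 1)))"
  define I2 where "I2 = ip \<Omega> (\<lambda>x. 1) (pd 2 (c (n + 1)))"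
  have e1: "\<theta>/(2*U) > 0" using th Upos by simp
  have e2: "\<theta>/(2*U*(\<bar>\<alpha>\<bar>+1)) > 0" using th Upos by (simp add: add_pos_nonneg)
  have y1: "\<bar>I1\<bar> \<le> (1/(2*(\<theta>/(2*U)))) * nrm2 \<Omega> (hats c n) + ((\<theta>/(2*U))/2) * P"
    unfolding I1_def P_def by (rule young_ip[OF e1 sq_int[OF fin om gh] sq_int[OF fin om gp]])
  have y2: "\<bar>I2\<bar> \<le> (1/(2*(\<theta>/(2*U*(\<bar>\<alpha>\<bar>+1))))) * measure lborel \<Omega> + ((\<theta>/(2*U*(\<bar>\<alpha>\<bar>+1)))/2) * P"
    unfolding I2_def P_def nrm2_one[symmetric]
    by (rule young_ip[OF e2 sq_int[OF fin om good_const[OF om]] sq_int[OF fin om gp]])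
  have a1: "U * I1 \<le> (U^2/\<theta>) * nrm2 \<Omega> (hats c n) + (\<theta>/4) * P" by (rule alg_young1[OF Upos th y1])
  have a2: "U * \<alpha> * I2 \<le> (U^2*\<bar>\<alpha>\<bar>*(\<bar>\<alpha>\<bar>+1)/\<theta>) * measure lborel \<Omega> + (\<theta>/4) * P"
    by (rule alg_young2[OF Upos th P0 y2])
  have eq: "(1/(4*\<tau>)) * (nrm2 \<Omega> (c (n+1)) + nrm2 \<Omega> (hats c (n+1)) - nrm2 \<Omega> (c n) - nrm2 \<Omega> (hats c n) + Z)
      + \<theta> * gnrm2 \<Omega> (c (n+1)) = U * I1 + U * \<alpha> * I2"
    using eq0 unfolding bdf bt I1_def I2_def gnrm2_def by simp
  define L where "L = nrm2 \<Omega> (c (n+1)) + nrm2 \<Omega> (hats c (n+1)) - nrm2 \<Omega> (c n) - nrm2 \<Omega> (hats c n)"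
  have "(1/(4*\<tau>)) * (L + Z) + \<theta> * gnrm2 \<Omega> (c (n+1)) \<le>
     (U^2/\<theta>) * nrm2 \<Omega> (hats c n) + (U^2*\<bar>\<alpha>\<bar>*(\<bar>\<alpha>\<bar>+1)/\<theta>) * measure lborel \<Omega> + (\<theta>/2) * gnrm2 \<Omega> (c (n+1))"
  proof -
    have "(\<theta>/2) * P \<le> (\<theta>/2) * gnrm2 \<Omega> (c (n+1))" using PG th by (intro mult_left_mono) auto
    then show ?thesis using eq a1 a2 unfolding L_def by linarith
  qed
  then have "(1/(4*\<tau>)) * L + (\<theta>/2) * gnrm2 \<Omega> (c (n+1)) \<le>
     (U^2/\<theta>) * nrm2 \<Omega> (hats c n) + (U^2*\<bar>\<alpha>\<bar>*(\<bar>\<alpha>\<bar>+1)/\<theta>) * measure lborel \<Omega>"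
  proof -
    have "(1/(4*\<tau>)) * (L + Z) = (1/(4*\<tau>)) * L + (1/(4*\<tau>)) * Z" by (simp add: distrib_left)
    moreover have "0 \<le> (1/(4*\<tau>)) * Z" using Z tau_pos by simp
    ultimately show ?thesis using \<open>(1/(4*\<tau>)) * (L + Z) + \<theta> * gnrm2 \<Omega> (c (n+1)) \<le> _\<close> by linarith
  qed
  then have "4*\<tau> * ((1/(4*\<tau>)) * L + (\<theta>/2) * gnrm2 \<Omega> (c (n+1))) \<le>
     4*\<tau> * ((U^2/\<theta>) * nrm2 \<Omega> (hats c n) + (U^2*\<bar>\<alpha>\<bar>*(\<bar>\<alpha>\<bar>+1)/\<theta>) * measure lborel \<Omega>)"
    using tau_pos by (intro mult_left_mono) auto
  moreover have "4*\<tau> * ((1/(4*\<tau>)) * L + (\<theta>/2) * gnrm2 \<Omega> (c (n+1))) = L + 2 * \<tau> * \<theta> * gnrm2 \<Omega> (c (n+1))"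
    using tau_pos by (simp add: field_simps)
  moreover have "4*\<tau> * ((U^2/\<theta>) * nrm2 \<Omega> (hats c n) + (U^2*\<bar>\<alpha>\<bar>*(\<bar>\<alpha>\<bar>+1)/\<theta>) * measure lborel \<Omega>)
     = \<tau> * (4 * U^2 / \<theta>) * nrm2 \<Omega> (hats c n) + \<tau> * (4 * U^2 * \<bar>\<alpha>\<bar> * (\<bar>\<alpha>\<bar>+1) / \<theta>) * measure lborel \<Omega>"
    by (simp add: algebra_simps)
  ultimately have "L + 2 * \<tau> * \<theta> * gnrm2 \<Omega> (c (n+1)) \<le>
     \<tau> * (4 * U^2 / \<theta>) * nrm2 \<Omega> (hats c n) + \<tau> * (4 * U^2 * \<bar>\<alpha>\<bar> * (\<bar>\<alpha>\<bar>+1) / \<theta>) * measure lborel \<Omega>"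
    by simp
  then show ?thesis unfolding L_def by simp
qed

end

context bdfs begin

lemma c_first:
  shows "nrm2 \<Omega> (c 1) \<le> nrm2 \<Omega> (c 0) + \<tau> * (2 * U^2 / \<theta>) * nrm2 \<Omega> (c 0)
        + \<tau> * (2 * U^2 * \<bar>\<alpha>\<bar> * (\<bar>\<alpha>\<bar>+1) / \<theta>) * measure lborel \<Omega>"
proof -
  have mem: "c 1 \<in> Hh \<Omega> Tr" using s_mem N1 by auto
  note eq0 = s_Ic[rule_format, OF mem]
  have ga: "good \<Omega> (c 1)" and gb: "good \<Omega> (c 0)" using cgood N1 by auto
  have gp: "good \<Omega> (pd 2 (c 1))" using pdgood N1 by auto
  have bt: "btri \<Omega> (u 0) (c 1) (c 1) = 0" unfolding btri_def by simp
  define Z where "Z = nrm2 \<Omega> (\<lambda>x. c 1 x - c 0 x)"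
  have Z: "0 \<le> Z" unfolding Z_def by (rule nrm2_nonneg)
  have eul: "ip \<Omega> (\<lambda>x. (c 1 x - c 0 x) / \<tau>) (c 1)
     = (1/(2*\<tau>)) * (nrm2 \<Omega> (c 1) - nrm2 \<Omega> (c 0) + Z)"
    unfolding Z_def by (rule euler_scalar[OF fin om ga gb tau_pos])
  define P where "P = nrm2 \<Omega> (pd 2 (c 1))"
  have PG: "P \<le> gnrm2 \<Omega> (c 1)" unfolding P_def using P_le_G N1 by simp
  have P0: "0 \<le> P" unfolding P_def by (rule nrm2_nonneg)
  define I1 where "I1 = ip \<Omega> (c 0) (pd 2 (c 1))"
  define I2 where "I2 = ip \<Omega> (\<lambda>x. 1) (pd 2 (c 1))"
  have e1: "\<theta>/(2*U) > 0" using th Upos by simp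
  have e2: "\<theta>/(2*U*(\<bar>\<alpha>\<bar>+1)) > 0" using th Upos by (simp add: add_pos_nonneg)
  have y1: "\<bar>I1\<bar> \<le> (1/(2*(\<theta>/(2*U)))) * nrm2 \<Omega> (c 0) + ((\<theta>/(2*U))/2) * P"
    unfolding I1_def P_def by (rule young_ip[OF e1 sq_int[OF fin om gb] sq_int[OF fin om gp]])
  have y2: "\<bar>I2\<bar> \<le> (1/(2*(\<theta>/(2*U*(\<bar>\<alpha>\<bar>+1))))) * measure lborel \<Omega> + ((\<theta>/(2*U*(\<bar>\<alpha>\<bar>+1)))/2) * P"
    unfolding I2_def P_def nrm2_one[symmetric]
    by (rule young_ip[OF e2 sq_int[OF fin om good_const[OF om]] sq_int[OF fin om gp]])
  have a1: "U * I1 \<le> (U^2/\<theta>) * nrm2 \<Omega> (c 0) + (\<theta>/4) * P" by (rule alg_young1[OF Upos th y1])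
  have a2: "U * \<alpha> * I2 \<le> (U^2*\<bar>\<alpha>\<bar>*(\<bar>\<alpha>\<bar>+1)/\<theta>) * measure lborel \<Omega> + (\<theta>/4) * P"
    by (rule alg_young2[OF Upos th P0 y2])
  have eq: "(1/(2*\<tau>)) * (nrm2 \<Omega> (c 1) - nrm2 \<Omega> (c 0) + Z)
      + \<theta> * gnrm2 \<Omega> (c 1) = U * I1 + U * \<alpha> * I2"
    using eq0 unfolding eul bt I1_def I2_def gnrm2_def by simp
  define L where "L = nrm2 \<Omega> (c 1) - nrm2 \<Omega> (c 0)"
  have G0: "0 \<le> gnrm2 \<Omega> (c 1)" by (rule gnrm2_nonneg)
  have hh: "(1/(2*\<tau>)) * (L + Z) + \<theta> * gnrm2 \<Omega> (c 1) \<le>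
     (U^2/\<theta>) * nrm2 \<Omega> (c 0) + (U^2*\<bar>\<alpha>\<bar>*(\<bar>\<alpha>\<bar>+1)/\<theta>) * measure lborel \<Omega> + (\<theta>/2) * gnrm2 \<Omega> (c 1)"
  proof -
    have "(\<theta>/2) * P \<le> (\<theta>/2) * gnrm2 \<Omega> (c 1)" using PG th by (intro mult_left_mono) auto
    then show ?thesis using eq a1 a2 unfolding L_def by linarith
  qed
  have h: "(1/(2*\<tau>)) * L \<le>
     (U^2/\<theta>) * nrm2 \<Omega> (c 0) + (U^2*\<bar>\<alpha>\<bar>*(\<bar>\<alpha>\<bar>+1)/\<theta>) * measure lborel \<Omega>"
  proof -
    have "(1/(2*\<tau>)) * (L + Z) = (1/(2*\<tau>)) * L + (1/(2*\<tau>)) * Z" by (simp add: distrib_left)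
    moreover have "0 \<le> (1/(2*\<tau>)) * Z" using Z tau_pos by simp
    moreover have "0 \<le> (\<theta>/2) * gnrm2 \<Omega> (c 1)" using th G0 by simp
    ultimately show ?thesis using hh by linarith
  qed
  have "2*\<tau> * ((1/(2*\<tau>)) * L) \<le>
     2*\<tau> * ((U^2/\<theta>) * nrm2 \<Omega> (c 0) + (U^2*\<bar>\<alpha>\<bar>*(\<bar>\<alpha>\<bar>+1)/\<theta>) * measure lborel \<Omega>)"
    using tau_pos h by (intro mult_left_mono) auto
  moreover have "2*\<tau> * ((1/(2*\<tau>)) * L) = L" using tau_pos by simp
  moreover have "2*\<tau> * ((U^2/\<theta>) * nrm2 \<Omega> (c 0) + (U^2*\<bar>\<alpha>\<bar>*(\<bar>\<alpha>\<bar>+1)/\<theta>) * measure lborel \<Omega>)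
     = \<tau> * (2 * U^2 / \<theta>) * nrm2 \<Omega> (c 0) + \<tau> * (2 * U^2 * \<bar>\<alpha>\<bar> * (\<bar>\<alpha>\<bar>+1) / \<theta>) * measure lborel \<Omega>"
    by (simp add: algebra_simps)
  ultimately show ?thesis unfolding L_def by linarith
qed

end

context bdfs begin

lemma W_lower:
  assumes gh: "good \<Omega> h"
  shows "(1/k) * gnrm2v \<Omega> w \<le> wgrad_v \<Omega> (\<lambda>x. \<nu> (h x + \<alpha>)) w w"
proof -
  have hm: "(\<lambda>x. indicator \<Omega> x *\<^sub>R h x) \<in> borel_measurable lborel"
    using gh unfolding good_def set_borel_measurable_def by blast
  have "(\<lambda>x. \<nu> (indicator \<Omega> x *\<^sub>R h x + \<alpha>)) \<in> borel_measurable lborel"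
    by (rule borel_measurable_continuous_on[OF nu_cont]) (use hm in simp)
  then have m0: "(\<lambda>x. indicator \<Omega> x *\<^sub>R \<nu> (indicator \<Omega> x *\<^sub>R h x + \<alpha>)) \<in> borel_measurable lborel"
    using om by (intro borel_measurable_scaleR borel_measurable_indicator) auto
  have "(\<lambda>x. indicator \<Omega> x *\<^sub>R \<nu> (indicator \<Omega> x *\<^sub>R h x + \<alpha>)) = (\<lambda>x. indicator \<Omega> x *\<^sub>R \<nu> (h x + \<alpha>))"
    by (auto simp: indicator_def)
  then have wm: "set_borel_measurable lborel \<Omega> (\<lambda>x. \<nu> (h x + \<alpha>))"
    using m0 unfolding set_borel_measurable_def by simp
  have k: "k > 0" using kge by simp
  define S where "S = (\<lambda>x. \<Sum>i\<in>UNIV. pgrad (vcomp w i) x \<bullet> pgrad (vcomp w i) x)"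
  have wb: "1/k \<le> \<nu> (h x + \<alpha>) \<and> \<nu> (h x + \<alpha>) \<le> k" for x using nu_bounds by blast
  have S0: "0 \<le> S x" for x unfolding S_def by (intro sum_nonneg) simp
  have e1: "gnrm2v \<Omega> w = (LINT x:\<Omega>|lborel. S x)" unfolding gnrm2v_def wgrad_v_def S_def by simp
  have e2: "wgrad_v \<Omega> (\<lambda>x. \<nu> (h x + \<alpha>)) w w = (LINT x:\<Omega>|lborel. \<nu> (h x + \<alpha>) * S x)"
    unfolding wgrad_v_def S_def by simp
  show ?thesis unfolding e1 e2 by (rule weight_lower[OF k wm wb S0])
qed

lemma f_int:
  assumes t: "t \<in> {0..T}"
  shows "set_integrable lborel \<Omega> (\<lambda>x. f t x \<bullet> f t x)" and "nrm2v \<Omega> (f t) \<le> M"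
proof -
  have l: "L2 \<Omega> (vcomp (f t) i)" for i using fL2 t by blast
  then have "set_integrable lborel \<Omega> (\<lambda>x. (f t x $ i)\<^sup>2)" for i
    unfolding L2_def vcomp_def by blast
  then have "set_integrable lborel \<Omega> (\<lambda>x. (f t x $ 1)\<^sup>2 + (f t x $ 2)\<^sup>2)" by simp
  then show "set_integrable lborel \<Omega> (\<lambda>x. f t x \<bullet> f t x)"
    unfolding inner_pt by (simp add: power2_eq_square)
  show "nrm2v \<Omega> (f t) \<le> M" using fL2 t by blast
qed

lemma rhs_bound:
  assumes gw: "vgood \<Omega> w" and gh: "good \<Omega> h" and t: "t \<in> {0..T}" and e: "\<epsilon> > 0"
  shows "- g * ip \<Omega> (\<lambda>x. 1 + \<gamma> * h x) (vcomp w 2) + ipv \<Omega> (f t) w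
    \<le> (1/(2*\<epsilon>)) * (\<bar>g\<bar> * (2 * measure lborel \<Omega> + 2 * \<gamma>^2 * nrm2 \<Omega> h) + M)
       + (\<bar>g\<bar> + 1) * (\<epsilon>/2) * nrm2v \<Omega> w"
proof -
  have g1: "good \<Omega> (\<lambda>x. 1 + \<gamma> * h x)" by (intro good_add good_cmult good_const om gh)
  have g2: "good \<Omega> (vcomp w 2)" using gw unfolding vgood_def by blast
  have y1: "\<bar>ip \<Omega> (\<lambda>x. 1 + \<gamma> * h x) (vcomp w 2)\<bar> \<le> (1/(2*\<epsilon>)) * nrm2 \<Omega> (\<lambda>x. 1 + \<gamma> * h x) + (\<epsilon>/2) * nrm2 \<Omega> (vcomp w 2)"
    by (rule young_ip[OF e sq_int[OF fin om g1] sq_int[OF fin om g2]])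
  have y2: "\<bar>ipv \<Omega> (f t) w\<bar> \<le> (1/(2*\<epsilon>)) * nrm2v \<Omega> (f t) + (\<epsilon>/2) * nrm2v \<Omega> w"
    by (rule young_ipv[OF e f_int(1)[OF t] vsq_int[OF fin om gw]])
  have H: "nrm2 \<Omega> (\<lambda>x. 1 + \<gamma> * h x) \<le> 2 * measure lborel \<Omega> + 2 * \<gamma>^2 * nrm2 \<Omega> h"
  proof -
    have "nrm2 \<Omega> (\<lambda>x. 1 + \<gamma> * h x) \<le> (LINT x:\<Omega>|lborel. 2 * 1 + 2 * \<gamma>^2 * (h x * h x))"
      unfolding nrm2_def ip_def
    proof (rule set_integral_mono)
      fix x
      have "2 * 1 + 2 * \<gamma>^2 * (h x * h x) - (1 + \<gamma> * h x) * (1 + \<gamma> * h x) = (1 - \<gamma> * h x) * (1 - \<gamma> * h x)"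
        by (simp add: algebra_simps power2_eq_square)
      moreover have "0 \<le> (1 - \<gamma> * h x) * (1 - \<gamma> * h x)" by simp
      ultimately show "(1 + \<gamma> * h x) * (1 + \<gamma> * h x) \<le> 2 * 1 + 2 * \<gamma>^2 * (h x * h x)" by linarith
    next
      show "set_integrable lborel \<Omega> (\<lambda>x. (1 + \<gamma> * h x) * (1 + \<gamma> * h x))" by (rule sq_int[OF fin om g1])
      show "set_integrable lborel \<Omega> (\<lambda>x. 2 * 1 + 2 * \<gamma>^2 * (h x * h x))"
        using sq_int[OF fin om gh] good_integrable[OF fin om good_const[OF om]] by simp
    qed
    also have "\<dots> = 2 * measure lborel \<Omega> + 2 * \<gamma>^2 * nrm2 \<Omega> h"
      unfolding nrm2_def ip_def using sq_int[OF fin om gh] good_integrable[OF fin om good_const[OF om]] fin om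
      by (simp add: set_integral_const)
    finally show ?thesis .
  qed
  have Q: "nrm2 \<Omega> (vcomp w 2) \<le> nrm2v \<Omega> w"
    unfolding nrm2_def ip_def nrm2v_def ipv_def
  proof (rule set_integral_mono)
    fix x show "vcomp w 2 x * vcomp w 2 x \<le> w x \<bullet> w x" unfolding inner_pt vcomp_def by simp
  next
    show "set_integrable lborel \<Omega> (\<lambda>x. vcomp w 2 x * vcomp w 2 x)" by (rule sq_int[OF fin om g2])
    show "set_integrable lborel \<Omega> (\<lambda>x. w x \<bullet> w x)" by (rule vsq_int[OF fin om gw])
  qed
  have F: "nrm2v \<Omega> (f t) \<le> M" by (rule f_int(2)[OF t])
  have q0: "0 \<le> nrm2 \<Omega> (vcomp w 2)" by (rule nrm2_nonneg)
  have "- g * ip \<Omega> (\<lambda>x. 1 + \<gamma> * h x) (vcomp w 2) \<le> \<bar>g\<bar> * \<bar>ip \<Omega> (\<lambda>x. 1 + \<gamma> * h x) (vcomp w 2)\<bar>"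
  proof -
    have "- g * ip \<Omega> (\<lambda>x. 1 + \<gamma> * h x) (vcomp w 2) \<le> \<bar>- g * ip \<Omega> (\<lambda>x. 1 + \<gamma> * h x) (vcomp w 2)\<bar>"
      by (rule abs_ge_self)
    also have "\<dots> = \<bar>g\<bar> * \<bar>ip \<Omega> (\<lambda>x. 1 + \<gamma> * h x) (vcomp w 2)\<bar>" by (simp add: abs_mult)
    finally show ?thesis .
  qed
  also have "\<dots> \<le> \<bar>g\<bar> * ((1/(2*\<epsilon>)) * (2 * measure lborel \<Omega> + 2 * \<gamma>^2 * nrm2 \<Omega> h) + (\<epsilon>/2) * nrm2v \<Omega> w)"
  proof (rule mult_left_mono)
    have "(1/(2*\<epsilon>)) * nrm2 \<Omega> (\<lambda>x. 1 + \<gamma> * h x) \<le> (1/(2*\<epsilon>)) * (2 * measure lborel \<Omega> + 2 * \<gamma>^2 * nrm2 \<Omega> h)"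
      using H e by (intro mult_left_mono) auto
    moreover have "(\<epsilon>/2) * nrm2 \<Omega> (vcomp w 2) \<le> (\<epsilon>/2) * nrm2v \<Omega> w"
      using Q e by (intro mult_left_mono) auto
    ultimately show "\<bar>ip \<Omega> (\<lambda>x. 1 + \<gamma> * h x) (vcomp w 2)\<bar> \<le> (1/(2*\<epsilon>)) * (2 * measure lborel \<Omega> + 2 * \<gamma>^2 * nrm2 \<Omega> h) + (\<epsilon>/2) * nrm2v \<Omega> w"
      using y1 by linarith
  qed simp
  finally have a1: "- g * ip \<Omega> (\<lambda>x. 1 + \<gamma> * h x) (vcomp w 2) \<le> \<bar>g\<bar> * ((1/(2*\<epsilon>)) * (2 * measure lborel \<Omega> + 2 * \<gamma>^2 * nrm2 \<Omega> h) + (\<epsilon>/2) * nrm2v \<Omega> w)" .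
  have a2: "ipv \<Omega> (f t) w \<le> (1/(2*\<epsilon>)) * M + (\<epsilon>/2) * nrm2v \<Omega> w"
  proof -
    have "(1/(2*\<epsilon>)) * nrm2v \<Omega> (f t) \<le> (1/(2*\<epsilon>)) * M" using F e by (intro mult_left_mono) auto
    then show ?thesis using y2 by linarith
  qed
  have "\<bar>g\<bar> * ((1/(2*\<epsilon>)) * (2 * measure lborel \<Omega> + 2 * \<gamma>^2 * nrm2 \<Omega> h) + (\<epsilon>/2) * nrm2v \<Omega> w)
     + ((1/(2*\<epsilon>)) * M + (\<epsilon>/2) * nrm2v \<Omega> w)
     = (1/(2*\<epsilon>)) * (\<bar>g\<bar> * (2 * measure lborel \<Omega> + 2 * \<gamma>^2 * nrm2 \<Omega> h) + M)
       + (\<bar>g\<bar> + 1) * (\<epsilon>/2) * nrm2v \<Omega> w"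
    by (simp add: algebra_simps)
  then show ?thesis using a1 a2 by linarith
qed

end

lemma alg_u:
  fixes \<tau> k gg X Q Lv Z G \<epsilon> :: real
  assumes t: "\<tau> > 0" and k: "k > 0" and gg: "gg \<ge> 0" and Z: "Z \<ge> 0"
    and e: "\<epsilon> = 1 / (4 * (gg + 1) * (1 + \<tau>))"
    and h: "(1/(4*\<tau>)) * (Lv + Z) + (1/k) * G \<le> (1/(2*\<epsilon>)) * X + (gg+1) * (\<epsilon>/2) * Q"
  shows "Lv + (4*\<tau>/k) * G \<le> 8*\<tau>*(gg+1)*(1+\<tau>) * X + (\<tau>/(2*(1+\<tau>))) * Q"
proof -
  have "4*\<tau> * ((1/(4*\<tau>)) * (Lv + Z) + (1/k) * G) \<le> 4*\<tau> * ((1/(2*\<epsilon>)) * X + (gg+1) * (\<epsilon>/2) * Q)"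
    using h t by (intro mult_left_mono) auto
  moreover have "4*\<tau> * ((1/(4*\<tau>)) * (Lv + Z) + (1/k) * G) = Lv + Z + (4*\<tau>/k) * G"
    using t k by (simp add: field_simps)
  moreover have "4*\<tau> * ((1/(2*\<epsilon>)) * X + (gg+1) * (\<epsilon>/2) * Q) = 8*\<tau>*(gg+1)*(1+\<tau>) * X + (\<tau>/(2*(1+\<tau>))) * Q"
  proof -
    have gen: "4*\<tau> * ((1/(2*(1/(4*a*b)))) * X + a * ((1/(4*a*b))/2) * Q) = 8*\<tau>*a*b * X + (\<tau>/(2*b)) * Q"
      if "a > 0" "b > 0" for a b :: real using that by (simp add: field_simps)
    show ?thesis unfolding e using gen[of "gg+1" "1+\<tau>"] t gg by (simp add: mult.assoc)
  qed
  ultimately show ?thesis using Z by linarith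
qed

lemma alg_u1:
  fixes \<tau> k gg X Q Lv Z G \<epsilon> :: real
  assumes t: "\<tau> > 0" and k: "k > 0" and gg: "gg \<ge> 0" and Z: "Z \<ge> 0"
    and e: "\<epsilon> = 1 / (2 * (gg + 1) * (1 + \<tau>))"
    and h: "(1/(2*\<tau>)) * (Lv + Z) + (1/k) * G \<le> (1/(2*\<epsilon>)) * X + (gg+1) * (\<epsilon>/2) * Q"
  shows "Lv + (2*\<tau>/k) * G \<le> 2*\<tau>*(gg+1)*(1+\<tau>) * X + (\<tau>/(2*(1+\<tau>))) * Q"
proof -
  have "2*\<tau> * ((1/(2*\<tau>)) * (Lv + Z) + (1/k) * G) \<le> 2*\<tau> * ((1/(2*\<epsilon>)) * X + (gg+1) * (\<epsilon>/2) * Q)"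
    using h t by (intro mult_left_mono) auto
  moreover have "2*\<tau> * ((1/(2*\<tau>)) * (Lv + Z) + (1/k) * G) = Lv + Z + (2*\<tau>/k) * G"
    using t k by (simp add: field_simps)
  moreover have "2*\<tau> * ((1/(2*\<epsilon>)) * X + (gg+1) * (\<epsilon>/2) * Q) = 2*\<tau>*(gg+1)*(1+\<tau>) * X + (\<tau>/(2*(1+\<tau>))) * Q"
  proof -
    have gen: "2*\<tau> * ((1/(2*(1/(2*a*b)))) * X + a * ((1/(2*a*b))/2) * Q) = 2*\<tau>*a*b * X + (\<tau>/(2*b)) * Q"
      if "a > 0" "b > 0" for a b :: real using that by (simp add: field_simps)
    show ?thesis unfolding e using gen[of "gg+1" "1+\<tau>"] t gg by (simp add: mult.assoc)
  qed
  ultimately show ?thesis using Z by linarith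
qed

context bdfs begin

lemma u_step:
  assumes n: "1 \<le> n" "n + 1 \<le> N"
  shows "nrm2v \<Omega> (u (n+1)) + nrm2v \<Omega> (hatv u (n+1)) + (4*\<tau>/k) * gnrm2v \<Omega> (u (n+1))
     \<le> nrm2v \<Omega> (u n) + nrm2v \<Omega> (hatv u n)
        + 8*\<tau>*(\<bar>g\<bar>+1)*(1+\<tau>) * (\<bar>g\<bar> * (2 * measure lborel \<Omega> + 2 * \<gamma>^2 * nrm2 \<Omega> (hats c n)) + M)
        + (\<tau>/(2*(1+\<tau>))) * nrm2v \<Omega> (u (n+1))"
proof -
  have memv: "u (n+1) \<in> Vh \<Omega> Tr" using s_mem n by auto
  have memp: "p (n+1) \<in> Mh \<Omega> Tr" using s_p n by auto
  note eq0 = conjunct1[OF s_II[OF n], rule_format, OF memv memp]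
  have ga: "vgood \<Omega> (u (n+1))" and gb: "vgood \<Omega> (u n)" and ge: "vgood \<Omega> (u (n-1))"
    using ugood n by auto
  have gb': "good \<Omega> (c n)" and ge': "good \<Omega> (c (n-1))" using cgood n by auto
  have gh: "good \<Omega> (hats c n)"
    using good3[OF om gb' ge' gb', of 2 "-1" 0] unfolding hats_def by simp
  have bt: "Btri \<Omega> (hatv u n) (u (n + 1)) (u (n + 1)) = 0" unfolding Btri_def by simp
  have hs1: "hatv u (n+1) = (\<lambda>x. 2 *\<^sub>R u (n+1) x - u n x)" unfolding hatv_def by simp
  have hs0: "hatv u n = (\<lambda>x. 2 *\<^sub>R u n x - u (n-1) x)" unfolding hatv_def by simp
  define Z where "Z = nrm2v \<Omega> (\<lambda>x. u (n+1) x - 2 *\<^sub>R u n x + u (n-1) x)"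
  have Z: "0 \<le> Z" unfolding Z_def by (rule nrm2v_nonneg)
  have bdf: "ipv \<Omega> (\<lambda>x. (1 / (2 * \<tau>)) *\<^sub>R (3 *\<^sub>R u (n + 1) x - 4 *\<^sub>R u n x + u (n - 1) x)) (u (n+1))
     = (1/(4*\<tau>)) * (nrm2v \<Omega> (u (n+1)) + nrm2v \<Omega> (hatv u (n+1)) - nrm2v \<Omega> (u n) - nrm2v \<Omega> (hatv u n) + Z)"
    unfolding hs1 hs0 Z_def by (rule bdf_vec[OF fin om ga gb ge tau_pos])
  have W: "(1/k) * gnrm2v \<Omega> (u (n+1)) \<le> wgrad_v \<Omega> (\<lambda>x. \<nu> (hats c n x + \<alpha>)) (u (n+1)) (u (n+1))"
    by (rule W_lower[OF gh])
  have t: "real (n + 1) * \<tau> \<in> {0..T}"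
  proof -
    have "real (n+1) * \<tau> \<le> real N * \<tau>" using n tau_pos by (intro mult_right_mono) auto
    then show ?thesis using tauN tau_pos by (simp add: mult.commute)
  qed
  define \<epsilon> where "\<epsilon> = 1 / (4 * (\<bar>g\<bar> + 1) * (1 + \<tau>))"
  have e: "\<epsilon> > 0" unfolding \<epsilon>_def using tau_pos by (simp add: add_pos_nonneg)
  note rb = rhs_bound[OF ga gh t e]
  have eq: "(1/(4*\<tau>)) * (nrm2v \<Omega> (u (n+1)) + nrm2v \<Omega> (hatv u (n+1)) - nrm2v \<Omega> (u n) - nrm2v \<Omega> (hatv u n) + Z)
     + wgrad_v \<Omega> (\<lambda>x. \<nu> (hats c n x + \<alpha>)) (u (n+1)) (u (n+1))
     = - g * ip \<Omega> (\<lambda>x. 1 + \<gamma> * hats c n x) (vcomp (u (n + 1)) 2) + ipv \<Omega> (f (real (n + 1) * \<tau>)) (u (n + 1))"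
    using eq0 unfolding bdf bt by simp
  have h: "(1/(4*\<tau>)) * ((nrm2v \<Omega> (u (n+1)) + nrm2v \<Omega> (hatv u (n+1)) - nrm2v \<Omega> (u n) - nrm2v \<Omega> (hatv u n)) + Z)
     + (1/k) * gnrm2v \<Omega> (u (n+1))
     \<le> (1/(2*\<epsilon>)) * (\<bar>g\<bar> * (2 * measure lborel \<Omega> + 2 * \<gamma>^2 * nrm2 \<Omega> (hats c n)) + M)
       + (\<bar>g\<bar> + 1) * (\<epsilon>/2) * nrm2v \<Omega> (u (n+1))"
    using eq W rb by linarith
  have k: "k > 0" using kge by simp
  show ?thesis
    using alg_u[OF tau_pos k _ Z \<epsilon>_def h] by simp
qed

lemma u_first:
  shows "nrm2v \<Omega> (u 1) \<le> nrm2v \<Omega> (u 0)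
        + 2*\<tau>*(\<bar>g\<bar>+1)*(1+\<tau>) * (\<bar>g\<bar> * (2 * measure lborel \<Omega> + 2 * \<gamma>^2 * nrm2 \<Omega> (c 0)) + M)
        + (\<tau>/(2*(1+\<tau>))) * nrm2v \<Omega> (u 1)"
proof -
  have memv: "u 1 \<in> Vh \<Omega> Tr" using s_mem N1 by auto
  have memp: "p 1 \<in> Mh \<Omega> Tr" using s_p N1 by auto
  note eq0 = s_Iu[rule_format, OF memv memp]
  have ga: "vgood \<Omega> (u 1)" and gb: "vgood \<Omega> (u 0)" using ugood N1 by auto
  have gh: "good \<Omega> (c 0)" using cgood by auto
  have bt: "Btri \<Omega> (u 0) (u 1) (u 1) = 0" unfolding Btri_def by simp
  define Z where "Z = nrm2v \<Omega> (\<lambda>x. u 1 x - u 0 x)"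
  have Z: "0 \<le> Z" unfolding Z_def by (rule nrm2v_nonneg)
  have eul: "ipv \<Omega> (\<lambda>x. (1 / \<tau>) *\<^sub>R (u 1 x - u 0 x)) (u 1)
     = (1/(2*\<tau>)) * (nrm2v \<Omega> (u 1) - nrm2v \<Omega> (u 0) + Z)"
    unfolding Z_def by (rule euler_vec[OF fin om ga gb tau_pos])
  have W: "(1/k) * gnrm2v \<Omega> (u 1) \<le> wgrad_v \<Omega> (\<lambda>x. \<nu> (c 0 x + \<alpha>)) (u 1) (u 1)"
    by (rule W_lower[OF gh])
  have t: "1 * \<tau> \<in> {0..T}" using tau_le tau_pos by simp
  define \<epsilon> where "\<epsilon> = 1 / (2 * (\<bar>g\<bar> + 1) * (1 + \<tau>))"
  have e: "\<epsilon> > 0" unfolding \<epsilon>_def using tau_pos by (simp add: add_pos_nonneg)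
  note rb = rhs_bound[OF ga gh t e]
  have eq: "(1/(2*\<tau>)) * (nrm2v \<Omega> (u 1) - nrm2v \<Omega> (u 0) + Z)
     + wgrad_v \<Omega> (\<lambda>x. \<nu> (c 0 x + \<alpha>)) (u 1) (u 1)
     = - g * ip \<Omega> (\<lambda>x. 1 + \<gamma> * c 0 x) (vcomp (u 1) 2) + ipv \<Omega> (f (1 * \<tau>)) (u 1)"
    using eq0 unfolding eul bt by simp
  have h: "(1/(2*\<tau>)) * ((nrm2v \<Omega> (u 1) - nrm2v \<Omega> (u 0)) + Z)
     + (1/k) * gnrm2v \<Omega> (u 1)
     \<le> (1/(2*\<epsilon>)) * (\<bar>g\<bar> * (2 * measure lborel \<Omega> + 2 * \<gamma>^2 * nrm2 \<Omega> (c 0)) + M)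
       + (\<bar>g\<bar> + 1) * (\<epsilon>/2) * nrm2v \<Omega> (u 1)"
    using eq W rb by linarith
  have k: "k > 0" using kge by simp
  have G0: "0 \<le> (2*\<tau>/k) * gnrm2v \<Omega> (u 1)" using tau_pos k gnrm2v_nonneg by simp
  show ?thesis
    using alg_u1[OF tau_pos k _ Z \<epsilon>_def h] G0 by simp
qed

end

definition Kc :: "real \<Rightarrow> real \<Rightarrow> real" where "Kc U \<theta> = 4 * U^2 / \<theta>"
definition Lc :: "real \<Rightarrow> real \<Rightarrow> real \<Rightarrow> real \<Rightarrow> real" where
  "Lc U \<theta> \<alpha> A = 4 * U^2 * \<bar>\<alpha>\<bar> * (\<bar>\<alpha>\<bar>+1) / \<theta> * A"
definition Ebd :: "real \<Rightarrow> real \<Rightarrow> real \<Rightarrow> real \<Rightarrow> real \<Rightarrow> real \<Rightarrow> real" where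
  "Ebd U \<theta> \<alpha> A T Xb = exp (Kc U \<theta> * T) * (9 * (Xb * (1 + T * Kc U \<theta>) + T * Lc U \<theta> \<alpha> A) + 2 * Xb + T * Lc U \<theta> \<alpha> A)"

context bdfs begin

lemma c_total:
  assumes X0: "nrm2 \<Omega> (c 0) \<le> Xb"
  shows "\<And>n. 1 \<le> n \<Longrightarrow> n \<le> N \<Longrightarrow> nrm2 \<Omega> (c n) + nrm2 \<Omega> (hats c n) \<le> Ebd U \<theta> \<alpha> (measure lborel \<Omega>) T Xb"
    and "\<And>m. 1 \<le> m \<Longrightarrow> m \<le> N - 1 \<Longrightarrow>
      nrm2 \<Omega> (c (m+1)) + nrm2 \<Omega> (hats c (m+1)) + 2 * \<tau> * \<theta> * (\<Sum>n = 1..m. gnrm2 \<Omega> (c (n + 1)))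
      \<le> nrm2 \<Omega> (c 1) + nrm2 \<Omega> (hats c 1)
         + T * (Kc U \<theta> * Ebd U \<theta> \<alpha> (measure lborel \<Omega>) T Xb + Lc U \<theta> \<alpha> (measure lborel \<Omega>))"
proof -
  define A where "A = measure lborel \<Omega>"
  define E where "E = (\<lambda>n. nrm2 \<Omega> (c n) + nrm2 \<Omega> (hats c n))"
  define K where "K = Kc U \<theta>"
  define L where "L = Lc U \<theta> \<alpha> A"
  have K0: "K \<ge> 0" unfolding K_def Kc_def using th by simp
  have A0: "A \<ge> 0" unfolding A_def by simp
  have L0: "L \<ge> 0" unfolding L_def Lc_def using th A0 by simp
  have X0n: "0 \<le> nrm2 \<Omega> (c 0)" by (rule nrm2_nonneg)
  have Xb0: "0 \<le> Xb" using X0 X0n by linarith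
  have E0: "0 \<le> E n" for n unfolding E_def using nrm2_nonneg[of \<Omega>] by (simp add: add_nonneg_nonneg)
  have Y_le: "nrm2 \<Omega> (hats c n) \<le> E n" for n unfolding E_def using nrm2_nonneg[of \<Omega> "c n"] by simp
  have step: "E (n+1) + 2 * \<tau> * \<theta> * gnrm2 \<Omega> (c (n+1)) \<le> (1 + \<tau> * K) * E n + \<tau> * L"
    if n: "1 \<le> n" "n + 1 \<le> N" for n
  proof -
    note cs = c_step[OF n]
    have "\<tau> * (4 * U^2 / \<theta>) * nrm2 \<Omega> (hats c n) \<le> \<tau> * K * E n"
      unfolding K_def Kc_def using Y_le[of n] tau_pos th by (intro mult_left_mono) (auto)
    moreover have "\<tau> * (4 * U^2 * \<bar>\<alpha>\<bar> * (\<bar>\<alpha>\<bar>+1) / \<theta>) * measure lborel \<Omega> = \<tau> * L"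
      unfolding L_def Lc_def A_def by simp
    ultimately show ?thesis using cs unfolding E_def by (simp add: algebra_simps)
  qed
  have E1: "E 1 \<le> 9 * (Xb * (1 + T * K) + T * L) + 2 * Xb"
  proof -
    note cf = c_first
    have X1: "nrm2 \<Omega> (c 1) \<le> Xb * (1 + T * K) + T * L"
    proof -
      have "\<tau> * (2 * U^2 / \<theta>) * nrm2 \<Omega> (c 0) \<le> T * K * Xb"
      proof -
        have "\<tau> * (2 * U^2 / \<theta>) \<le> T * K" unfolding K_def Kc_def
          using tau_le tau_pos th by (intro mult_mono) (auto simp: divide_right_mono)
        then show ?thesis by (rule mult_mono) (use X0 X0n K0 Tpos in auto)
      qed
      moreover have "\<tau> * (2 * U^2 * \<bar>\<alpha>\<bar> * (\<bar>\<alpha>\<bar>+1) / \<theta>) * measure lborel \<Omega> \<le> T * L"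
      proof -
        have "\<tau> * (2 * U^2 * \<bar>\<alpha>\<bar> * (\<bar>\<alpha>\<bar>+1) / \<theta>) * A \<le> T * (4 * U^2 * \<bar>\<alpha>\<bar> * (\<bar>\<alpha>\<bar>+1) / \<theta>) * A"
          using tau_le tau_pos th A0 by (intro mult_right_mono mult_mono) (auto simp: divide_right_mono)
        then show ?thesis unfolding L_def Lc_def A_def by (simp add: mult.assoc)
      qed
      ultimately show ?thesis using cf X0 by (simp add: algebra_simps)
    qed
    have g1: "good \<Omega> (c 1)" and g0: "good \<Omega> (c 0)" using cgood N1 by auto
    have "nrm2 \<Omega> (hats c 1) \<le> 8 * nrm2 \<Omega> (c 1) + 2 * nrm2 \<Omega> (c 0)"
      unfolding hats_def using hat_scalar[OF fin om g1 g0] by simp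
    moreover have "nrm2 \<Omega> (c 1) + (8 * nrm2 \<Omega> (c 1) + 2 * nrm2 \<Omega> (c 0)) \<le> 9 * (Xb * (1 + T * K) + T * L) + 2 * Xb"
    proof -
      define P where "P = Xb * (1 + T * K) + T * L"
      have "nrm2 \<Omega> (c 1) \<le> P" using X1 unfolding P_def .
      then show ?thesis unfolding P_def[symmetric] using X0 by linarith
    qed
    ultimately show ?thesis unfolding E_def by linarith
  qed
  have gr: "E n \<le> exp (K * \<tau> * N) * (E 1 + \<tau> * N * L)" if "1 \<le> n" "n \<le> N" for n
  proof (rule gron[OF tau_pos K0 L0 E0, of N])
    fix n assume "1 \<le> n" "n + 1 \<le> N"
    then show "E (n + 1) \<le> (1 + \<tau> * K) * E n + \<tau> * L"
      using step[of n] gnrm2_nonneg[of \<Omega> "c (n+1)"] tau_pos th by (smt (verit) mult_nonneg_nonneg)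
  qed (use that in auto)
  have Ebd: "E n \<le> Ebd U \<theta> \<alpha> A T Xb" if "1 \<le> n" "n \<le> N" for n
  proof -
    have "E n \<le> exp (K * T) * (E 1 + T * L)" using gr[OF that] tauN by (simp add: mult.assoc)
    also have "\<dots> \<le> exp (K * T) * (9 * (Xb * (1 + T * K) + T * L) + 2 * Xb + T * L)"
    proof (rule mult_left_mono)
      show "E 1 + T * L \<le> 9 * (Xb * (1 + T * K) + T * L) + 2 * Xb + T * L"
        using E1 by (rule add_right_mono)
    qed simp
    finally show ?thesis unfolding Ebd_def K_def L_def by simp
  qed
  then show "\<And>n. 1 \<le> n \<Longrightarrow> n \<le> N \<Longrightarrow> nrm2 \<Omega> (c n) + nrm2 \<Omega> (hats c n) \<le> Ebd U \<theta> \<alpha> (measure lborel \<Omega>) T Xb"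
    unfolding E_def A_def by blast
  fix m assume m: "1 \<le> m" "m \<le> N - 1"
  note tl = tele[of N E "\<lambda>n. 2 * \<tau> * \<theta> * gnrm2 \<Omega> (c n)" "\<lambda>n. \<tau> * (K * E n + L)", OF _ m]
  have "E (m+1) + (\<Sum>n = 1..m. 2 * \<tau> * \<theta> * gnrm2 \<Omega> (c (n+1))) \<le> E 1 + (\<Sum>n = 1..m. \<tau> * (K * E n + L))"
  proof (rule tl)
    fix n assume n: "1 \<le> n" "n + 1 \<le> N"
    show "E (n + 1) + 2 * \<tau> * \<theta> * gnrm2 \<Omega> (c (n + 1)) \<le> E n + \<tau> * (K * E n + L)"
      using step[OF n] by (simp add: algebra_simps)
  qed
  also have "(\<Sum>n = 1..m. \<tau> * (K * E n + L)) \<le> (\<Sum>n = 1..m. \<tau> * (K * Ebd U \<theta> \<alpha> A T Xb + L))"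
  proof (rule sum_mono)
    fix n assume "n \<in> {1..m}"
    then have "E n \<le> Ebd U \<theta> \<alpha> A T Xb" using Ebd m by auto
    then show "\<tau> * (K * E n + L) \<le> \<tau> * (K * Ebd U \<theta> \<alpha> A T Xb + L)"
      using tau_pos K0 by (intro mult_left_mono add_right_mono) auto
  qed
  also have "\<dots> = real m * \<tau> * (K * Ebd U \<theta> \<alpha> A T Xb + L)" by simp
  also have "\<dots> \<le> T * (K * Ebd U \<theta> \<alpha> A T Xb + L)"
  proof -
    have "0 \<le> E 1" by (rule E0)
    then have "0 \<le> Ebd U \<theta> \<alpha> A T Xb" using Ebd[of 1] N1 by simp
    then have nn: "0 \<le> K * Ebd U \<theta> \<alpha> A T Xb + L" using K0 L0 by simp
    have "real m * \<tau> \<le> real N * \<tau>" using m tau_pos by (intro mult_right_mono) auto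
    then have "real m * \<tau> \<le> T" using tauN by (simp add: mult.commute)
    then show ?thesis using nn by (intro mult_right_mono) auto
  qed
  finally have fin1: "E (m+1) + (\<Sum>n = 1..m. 2 * \<tau> * \<theta> * gnrm2 \<Omega> (c (n+1))) \<le> E 1 + T * (K * Ebd U \<theta> \<alpha> A T Xb + L)"
    by simp
  have "2 * \<tau> * \<theta> * (\<Sum>n = 1..m. gnrm2 \<Omega> (c (n + 1))) = (\<Sum>n = 1..m. 2 * \<tau> * \<theta> * gnrm2 \<Omega> (c (n+1)))"
    by (simp add: sum_distrib_left)
  then show "nrm2 \<Omega> (c (m+1)) + nrm2 \<Omega> (hats c (m+1)) + 2 * \<tau> * \<theta> * (\<Sum>n = 1..m. gnrm2 \<Omega> (c (n + 1)))
      \<le> nrm2 \<Omega> (c 1) + nrm2 \<Omega> (hats c 1)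
         + T * (Kc U \<theta> * Ebd U \<theta> \<alpha> (measure lborel \<Omega>) T Xb + Lc U \<theta> \<alpha> (measure lborel \<Omega>))"
    using fin1 unfolding E_def K_def L_def A_def by simp
qed

end

definition Rb :: "real \<Rightarrow> real \<Rightarrow> real \<Rightarrow> real \<Rightarrow> real \<Rightarrow> real \<Rightarrow> real" where
  "Rb g \<gamma> T M A Eb = 8 * (\<bar>g\<bar>+1) * (1+T) * (\<bar>g\<bar> * (2 * A + 2 * \<gamma>^2 * Eb) + M)"
definition Q1b :: "real \<Rightarrow> real \<Rightarrow> real \<Rightarrow> real \<Rightarrow> real \<Rightarrow> real \<Rightarrow> real \<Rightarrow> real" where
  "Q1b g \<gamma> T M A Xb Ub = 2 * (Ub + 2 * T * (\<bar>g\<bar>+1) * (1+T) * (\<bar>g\<bar> * (2 * A + 2 * \<gamma>^2 * Xb) + M))"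
definition Vbd :: "real \<Rightarrow> real \<Rightarrow> real \<Rightarrow> real \<Rightarrow> real \<Rightarrow> real \<Rightarrow> real \<Rightarrow> real \<Rightarrow> real" where
  "Vbd g \<gamma> T M A Xb Ub Eb = exp T * (9 * Q1b g \<gamma> T M A Xb Ub + 2 * Ub + T * (2 * Rb g \<gamma> T M A Eb))"

lemma s_bounds:
  fixes \<tau> :: real assumes "\<tau> > 0"
  shows "\<tau> / (2 * (1 + \<tau>)) \<le> 1/2" "\<tau> / (2 * (1 + \<tau>)) \<le> \<tau> / 2" "0 \<le> \<tau> / (2 * (1 + \<tau>))"
  using assms by (auto simp: field_simps)

lemma gron_form:
  fixes V V' R \<tau> Q s :: real
  assumes t: "\<tau> > 0" and V: "V \<ge> 0" and R: "R \<ge> 0" and s: "s = \<tau> / (2 * (1 + \<tau>))"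
    and Q: "Q \<le> V'" and Q0: "0 \<le> Q" and h: "V' \<le> V + \<tau> * R + s * Q"
  shows "V' \<le> (1 + \<tau>) * V + \<tau> * (2 * R)"
proof -
  have s0: "0 \<le> s" using s t by simp
  have "s * Q \<le> s * V'" using Q s0 by (rule mult_left_mono)
  then have a: "(1 - s) * V' \<le> V + \<tau> * R" using h by (simp add: algebra_simps)
  have e: "2 * (1 + \<tau>) * (1 - s) = 2 + \<tau>" unfolding s using t by (simp add: field_simps)
  have ine: "2 * (1 + \<tau>) * ((1 - s) * V') \<le> 2 * (1 + \<tau>) * (V + \<tau> * R)" using a t by (intro mult_left_mono) auto
  moreover have eqq: "(2 + \<tau>) * V' = 2 * (1 + \<tau>) * ((1 - s) * V')"
  proof -
    have "(2 + \<tau>) * V' = (2 * (1 + \<tau>) * (1 - s)) * V'" using e by simp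
    then show ?thesis by (simp only: mult.assoc)
  qed
  have "(2 + \<tau>) * V' \<le> 2 * (1 + \<tau>) * (V + \<tau> * R)" by (rule ord_eq_le_trans[OF eqq ine])
  moreover have "2 * (1 + \<tau>) * (V + \<tau> * R) \<le> (2 + \<tau>) * ((1 + \<tau>) * V + \<tau> * (2 * R))"
  proof -
    have "(2 + \<tau>) * ((1 + \<tau>) * V + \<tau> * (2 * R)) - 2 * (1 + \<tau>) * (V + \<tau> * R) = \<tau> * (1 + \<tau>) * V + 2 * \<tau> * R"
      by (simp add: algebra_simps)
    moreover have "0 \<le> \<tau> * (1 + \<tau>) * V + 2 * \<tau> * R" using t V R by simp
    ultimately show ?thesis by linarith
  qed
  ultimately have "(2 + \<tau>) * V' \<le> (2 + \<tau>) * ((1 + \<tau>) * V + \<tau> * (2 * R))" by linarith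
  then show ?thesis using t by simp
qed

context bdfs begin

lemma M0: "0 \<le> M"
proof -
  have "T \<in> {0..T}" using Tpos by simp
  then show ?thesis using f_int(2) nrm2v_nonneg[of \<Omega> "f T"] by fastforce
qed

lemma u_total:
  assumes X0: "nrm2 \<Omega> (c 0) \<le> Xb" and U0: "nrm2v \<Omega> (u 0) \<le> Ub"
    and m: "1 \<le> m" "m \<le> N - 1"
  shows "nrm2v \<Omega> (u (m+1)) + nrm2v \<Omega> (hatv u (m+1)) + 2 * \<tau> * (1/k) * (\<Sum>n = 1..m. gnrm2v \<Omega> (u (n + 1)))
      \<le> nrm2v \<Omega> (u 1) + nrm2v \<Omega> (hatv u 1)
        + T * (Rb g \<gamma> T M (measure lborel \<Omega>) (Ebd U \<theta> \<alpha> (measure lborel \<Omega>) T Xb)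
             + Vbd g \<gamma> T M (measure lborel \<Omega>) Xb Ub (Ebd U \<theta> \<alpha> (measure lborel \<Omega>) T Xb) / 2)"
proof -
  define A where "A = measure lborel \<Omega>"
  define Eb where "Eb = Ebd U \<theta> \<alpha> A T Xb"
  define R where "R = Rb g \<gamma> T M A Eb"
  define Vb where "Vb = Vbd g \<gamma> T M A Xb Ub Eb"
  define V where "V = (\<lambda>n. nrm2v \<Omega> (u n) + nrm2v \<Omega> (hatv u n))"
  define s where "s = \<tau> / (2 * (1 + \<tau>))"
  have sb: "s \<le> 1/2" "s \<le> \<tau>/2" "0 \<le> s" unfolding s_def using s_bounds[OF tau_pos] by auto
  have k: "k > 0" using kge by simp
  have A0: "A \<ge> 0" unfolding A_def by simp
  have M0: "0 \<le> M" by (rule M0)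
  have X0n: "0 \<le> nrm2 \<Omega> (c 0)" by (rule nrm2_nonneg)
  have Xb0: "0 \<le> Xb" using X0 X0n by linarith
  have U0n: "0 \<le> nrm2v \<Omega> (u 0)" by (rule nrm2v_nonneg)
  have Ub0: "0 \<le> Ub" using U0 U0n by linarith
  have V0: "0 \<le> V n" for n unfolding V_def using nrm2v_nonneg[of \<Omega>] by (simp add: add_nonneg_nonneg)
  have Y: "nrm2 \<Omega> (hats c n) \<le> Eb" if "1 \<le> n" "n \<le> N" for n
    using c_total(1)[OF X0 that] nrm2_nonneg[of \<Omega> "c n"] unfolding Eb_def A_def by linarith
  have Eb0: "0 \<le> Eb" using Y[of 1] N1 nrm2_nonneg[of \<Omega> "hats c 1"] by linarith
  have R0: "0 \<le> R" unfolding R_def Rb_def using A0 Eb0 M0 Tpos by simp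
  have ust: "V (n+1) + (4*\<tau>/k) * gnrm2v \<Omega> (u (n+1)) \<le> V n + \<tau> * R + s * nrm2v \<Omega> (u (n+1))"
    if n: "1 \<le> n" "n + 1 \<le> N" for n
  proof -
    note us = u_step[OF n]
    define B1 where "B1 = \<bar>g\<bar> * (2 * A + 2 * \<gamma>^2 * nrm2 \<Omega> (hats c n)) + M"
    define B2 where "B2 = \<bar>g\<bar> * (2 * A + 2 * \<gamma>^2 * Eb) + M"
    have B1: "0 \<le> B1" unfolding B1_def using A0 M0 nrm2_nonneg[of \<Omega> "hats c n"] by simp
    have B12: "B1 \<le> B2" unfolding B1_def B2_def using Y[of n] n
      by (intro add_right_mono mult_left_mono) (auto intro: mult_left_mono)
    have "8*\<tau>*(\<bar>g\<bar>+1)*(1+\<tau>) * B1 \<le> \<tau> * (8 * (\<bar>g\<bar>+1) * (1+T) * B2)"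
    proof -
      have "(1+\<tau>) * B1 \<le> (1+T) * B2" using tau_le tau_pos B1 B12 by (intro mult_mono) auto
      then have "(8*\<tau>*(\<bar>g\<bar>+1)) * ((1+\<tau>) * B1) \<le> (8*\<tau>*(\<bar>g\<bar>+1)) * ((1+T) * B2)"
        using tau_pos by (intro mult_left_mono) auto
      then show ?thesis by (simp add: algebra_simps)
    qed
    then have "8*\<tau>*(\<bar>g\<bar>+1)*(1+\<tau>) * B1 \<le> \<tau> * R" unfolding R_def Rb_def B2_def .
    then show ?thesis using us unfolding V_def s_def B1_def A_def by linarith
  qed
  have V1: "V 1 \<le> 9 * Q1b g \<gamma> T M A Xb Ub + 2 * Ub"
  proof -
    note uf = u_first
    define W where "W = Ub + 2 * T * (\<bar>g\<bar>+1) * (1+T) * (\<bar>g\<bar> * (2 * A + 2 * \<gamma>^2 * Xb) + M)"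
    have "2*\<tau>*(\<bar>g\<bar>+1)*(1+\<tau>) * (\<bar>g\<bar> * (2 * A + 2 * \<gamma>^2 * nrm2 \<Omega> (c 0)) + M)
       \<le> 2 * T * (\<bar>g\<bar>+1) * (1+T) * (\<bar>g\<bar> * (2 * A + 2 * \<gamma>^2 * Xb) + M)"
    proof -
      have b: "\<bar>g\<bar> * (2 * A + 2 * \<gamma>^2 * nrm2 \<Omega> (c 0)) + M \<le> \<bar>g\<bar> * (2 * A + 2 * \<gamma>^2 * Xb) + M"
        using X0 by (intro add_right_mono mult_left_mono) (auto intro: mult_left_mono)
      have b0: "0 \<le> \<bar>g\<bar> * (2 * A + 2 * \<gamma>^2 * nrm2 \<Omega> (c 0)) + M" using A0 M0 X0n by simp
      have "(2*\<tau>*(\<bar>g\<bar>+1)) * ((1+\<tau>) * (\<bar>g\<bar> * (2 * A + 2 * \<gamma>^2 * nrm2 \<Omega> (c 0)) + M))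
         \<le> (2*T*(\<bar>g\<bar>+1)) * ((1+T) * (\<bar>g\<bar> * (2 * A + 2 * \<gamma>^2 * Xb) + M))"
        using tau_le tau_pos b b0 Tpos by (intro mult_mono) auto
      then show ?thesis by (simp add: algebra_simps)
    qed
    then have "(1 - s) * nrm2v \<Omega> (u 1) \<le> W"
      using uf U0 unfolding W_def s_def A_def by (simp add: algebra_simps)
    then have Q1: "nrm2v \<Omega> (u 1) \<le> Q1b g \<gamma> T M A Xb Ub"
    proof -
      assume a: "(1 - s) * nrm2v \<Omega> (u 1) \<le> W"
      have "(1/2) * nrm2v \<Omega> (u 1) \<le> (1 - s) * nrm2v \<Omega> (u 1)"
        using sb nrm2v_nonneg[of \<Omega> "u 1"] by (intro mult_right_mono) auto
      then have "nrm2v \<Omega> (u 1) \<le> 2 * W" using a by linarith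
      then show ?thesis unfolding Q1b_def W_def .
    qed
    have g1: "vgood \<Omega> (u 1)" and g0: "vgood \<Omega> (u 0)" using ugood N1 by auto
    have "nrm2v \<Omega> (hatv u 1) \<le> 8 * nrm2v \<Omega> (u 1) + 2 * nrm2v \<Omega> (u 0)"
      unfolding hatv_def using hat_vec[OF fin om g1 g0] by simp
    then show ?thesis unfolding V_def using Q1 U0 by linarith
  qed
  have gr: "V n \<le> exp (1 * \<tau> * N) * (V 1 + \<tau> * N * (2 * R))" if "1 \<le> n" "n \<le> N" for n
  proof (rule gron[OF tau_pos _ _ V0, of 1 "2 * R" N])
    fix n assume n: "1 \<le> n" "n + 1 \<le> N"
    have "V (n+1) \<le> V n + \<tau> * R + s * nrm2v \<Omega> (u (n+1))"
      using ust[OF n] gnrm2v_nonneg[of \<Omega> "u (n+1)"] tau_pos k by (smt (verit) divide_nonneg_pos mult_nonneg_nonneg)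
    moreover have "nrm2v \<Omega> (u (n+1)) \<le> V (n+1)" unfolding V_def using nrm2v_nonneg[of \<Omega> "hatv u (n+1)"] by simp
    ultimately show "V (n + 1) \<le> (1 + \<tau> * 1) * V n + \<tau> * (2 * R)"
      using gron_form[OF tau_pos V0 R0 s_def _ nrm2v_nonneg] by simp
  qed (use that R0 in auto)
  have Vbn: "V n \<le> Vb" if "1 \<le> n" "n \<le> N" for n
  proof -
    have "V n \<le> exp T * (V 1 + T * (2 * R))" using gr[OF that] tauN by (simp add: mult.commute)
    also have "\<dots> \<le> exp T * (9 * Q1b g \<gamma> T M A Xb Ub + 2 * Ub + T * (2 * R))"
    proof (rule mult_left_mono)
      show "V 1 + T * (2 * R) \<le> 9 * Q1b g \<gamma> T M A Xb Ub + 2 * Ub + T * (2 * R)"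
        using V1 by (rule add_right_mono)
    qed simp
    finally show ?thesis unfolding Vb_def Vbd_def R_def .
  qed
  have Vb0: "0 \<le> Vb" using Vbn[of 1] N1 V0[of 1] by linarith
  note tl = tele[of N V "\<lambda>n. 2 * \<tau> * (1/k) * gnrm2v \<Omega> (u n)" "\<lambda>n. \<tau> * (R + Vb / 2)", OF _ m]
  have "V (m+1) + (\<Sum>n = 1..m. 2 * \<tau> * (1/k) * gnrm2v \<Omega> (u (n+1))) \<le> V 1 + (\<Sum>n = 1..m. \<tau> * (R + Vb / 2))"
  proof (rule tl)
    fix n assume n: "1 \<le> n" "n + 1 \<le> N"
    have G0: "0 \<le> gnrm2v \<Omega> (u (n+1))" by (rule gnrm2v_nonneg)
    have a: "2 * \<tau> * (1/k) * gnrm2v \<Omega> (u (n+1)) \<le> (4*\<tau>/k) * gnrm2v \<Omega> (u (n+1))"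
      using G0 tau_pos k by (intro mult_right_mono) (auto simp: field_simps)
    have "s * nrm2v \<Omega> (u (n+1)) \<le> (\<tau>/2) * Vb"
    proof -
      have "nrm2v \<Omega> (u (n+1)) \<le> V (n+1)" unfolding V_def using nrm2v_nonneg[of \<Omega> "hatv u (n+1)"] by simp
      also have "\<dots> \<le> Vb" using Vbn n by simp
      finally have q: "nrm2v \<Omega> (u (n+1)) \<le> Vb" .
      show ?thesis by (rule mult_mono) (use sb q nrm2v_nonneg[of \<Omega> "u (n+1)"] in auto)
    qed
    moreover have "(\<tau>/2) * Vb = \<tau> * (Vb / 2)" by simp
    ultimately show "V (n + 1) + 2 * \<tau> * (1/k) * gnrm2v \<Omega> (u (n + 1)) \<le> V n + \<tau> * (R + Vb / 2)"
      using ust[OF n] a by (simp add: distrib_left)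
  qed
  also have "(\<Sum>n = 1..m. \<tau> * (R + Vb / 2)) = real m * \<tau> * (R + Vb / 2)" by simp
  also have "\<dots> \<le> T * (R + Vb / 2)"
  proof -
    have nn: "0 \<le> R + Vb / 2" using R0 Vb0 by simp
    have "real m * \<tau> \<le> real N * \<tau>" using m tau_pos by (intro mult_right_mono) auto
    then have "real m * \<tau> \<le> T" using tauN by (simp add: mult.commute)
    then show ?thesis using nn by (intro mult_right_mono) auto
  qed
  finally have fin1: "V (m+1) + (\<Sum>n = 1..m. 2 * \<tau> * (1/k) * gnrm2v \<Omega> (u (n+1))) \<le> V 1 + T * (R + Vb / 2)"
    by simp
  have "2 * \<tau> * (1/k) * (\<Sum>n = 1..m. gnrm2v \<Omega> (u (n + 1))) = (\<Sum>n = 1..m. 2 * \<tau> * (1/k) * gnrm2v \<Omega> (u (n+1)))"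
    by (simp add: sum_distrib_left)
  then show ?thesis using fin1 unfolding V_def R_def Vb_def Eb_def A_def by simp
qed

end

lemma compact_bound_vec:
  assumes bd: "bounded \<Omega>" and c: "continuous_on (closure \<Omega>) (u0 :: pt \<Rightarrow> pt)"
  shows "\<exists>B. \<forall>y\<in>closure \<Omega>. \<forall>i. \<bar>u0 y $ i\<bar> \<le> B"
proof -
  have "compact (closure \<Omega>)" using bd by (simp add: compact_closure)
  then have "compact (u0 ` closure \<Omega>)" using c by (metis compact_continuous_image)
  then obtain B where B: "\<forall>y\<in>u0 ` closure \<Omega>. norm y \<le> B"
    using compact_imp_bounded bounded_iff by metis
  have "\<bar>u0 y $ i\<bar> \<le> B" if "y \<in> closure \<Omega>" for y i
    using B that component_le_norm_cart[of "u0 y" i] by fastforce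
  then show ?thesis by blast
qed

lemma compact_bound_sc:
  assumes bd: "bounded \<Omega>" and c: "continuous_on (closure \<Omega>) (c0 :: pt \<Rightarrow> real)"
  shows "\<exists>B. \<forall>y\<in>closure \<Omega>. \<bar>c0 y\<bar> \<le> B"
proof -
  have "compact (closure \<Omega>)" using bd by (simp add: compact_closure)
  then have "compact (c0 ` closure \<Omega>)" using c by (metis compact_continuous_image)
  then obtain B where B: "\<forall>y\<in>c0 ` closure \<Omega>. norm y \<le> B"
    using compact_imp_bounded bounded_iff by metis
  then show ?thesis by auto
qed

theorem theorem3p1:
  fixes \<Omega> :: "pt set" and \<nu> :: "real \<Rightarrow> real"
    and \<theta> U g \<gamma> \<alpha> k \<beta> T \<sigma> :: real
    and f :: "real \<Rightarrow> pt \<Rightarrow> pt" and u0 :: "pt \<Rightarrow> pt" and c0 :: "pt \<Rightarrow> real"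
  assumes dom: "open \<Omega>" "bounded \<Omega>" "connected \<Omega>" "\<Omega> \<noteq> {}"
    and params: "\<theta> > 0" "U > 0" "k \<ge> 1" "\<beta> > 0" "T > 0" "\<sigma> > 0"
    and nu_smooth: "\<forall>j x. ((deriv ^^ j) \<nu>) differentiable (at x)"
    and nu_bounds: "\<forall>s. 1 / k \<le> \<nu> s \<and> \<nu> s \<le> k"
    and nu_deriv: "\<forall>s. \<bar>deriv \<nu> s\<bar> \<le> \<beta>"
    and f_Linf: "\<exists>M. \<forall>t\<in>{0..T}. (\<forall>i. L2 \<Omega> (vcomp (f t) i)) \<and> nrm2v \<Omega> (f t) \<le> M"
    and u0_H2: "\<forall>i. H2 \<Omega> (vcomp u0 i)"
    and u0_cont: "continuous_on (closure \<Omega>) u0"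
    and u0_trace: "\<forall>x\<in>frontier \<Omega>. u0 x = 0"
    and u0_div: "\<exists>g1 g2. weak_pd \<Omega> (vcomp u0 1) 1 g1 \<and> weak_pd \<Omega> (vcomp u0 2) 2 g2
                   \<and> (AE x in lborel. x \<in> \<Omega> \<longrightarrow> g1 x + g2 x = 0)"
    and c0_H2: "H2 \<Omega> c0"
    and c0_cont: "continuous_on (closure \<Omega>) c0"
    and c0_mean: "(LINT x:\<Omega>|lborel. c0 x) = 0"
  shows "\<exists>C>0. \<forall>Tr N u p c. fe_triangulation \<Omega> Tr \<and> quasi_uniform \<sigma> Tr \<and> N \<ge> 1
           \<and> bdf2_solution \<Omega> \<nu> \<alpha> \<theta> U g \<gamma> f u0 c0 T Tr N u p c \<longrightarrow>
          (\<forall>m. 1 \<le> m \<and> m \<le> N - 1 \<longrightarrow>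
             nrm2v \<Omega> (u (m + 1)) + nrm2v \<Omega> (hatv u (m + 1))
             + nrm2 \<Omega> (c (m + 1)) + nrm2 \<Omega> (hats c (m + 1))
             + 2 * (T / real N) * (1 / k) * (\<Sum>n = 1..m. gnrm2v \<Omega> (u (n + 1)))
             + 2 * (T / real N) * \<theta> * (\<Sum>n = 1..m. gnrm2 \<Omega> (c (n + 1)))
           \<le> nrm2v \<Omega> (u 1) + nrm2v \<Omega> (hatv u 1) + nrm2 \<Omega> (c 1) + nrm2 \<Omega> (hats c 1)
             + C * (T / real N) * (\<Sum>n = 0..N - 1.
                  nrm2v \<Omega> (f (real (n + 1) * (T / real N))) + measure lborel \<Omega>))"
proof -
  obtain M where M: "\<forall>t\<in>{0..T}. (\<forall>i. L2 \<Omega> (vcomp (f t) i)) \<and> nrm2v \<Omega> (f t) \<le> M"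
    using f_Linf by blast
  have nu_cont: "continuous_on UNIV \<nu>"
  proof -
    have "\<nu> differentiable (at x)" for x using nu_smooth[rule_format, of 0 x] by simp
    then show ?thesis by (simp add: differentiable_imp_continuous_within continuous_at_imp_continuous_on)
  qed
  obtain Bu where Bu: "\<forall>y\<in>closure \<Omega>. \<forall>i. \<bar>u0 y $ i\<bar> \<le> Bu"
    using compact_bound_vec[OF dom(2) u0_cont] by blast
  obtain Bc where Bc: "\<forall>y\<in>closure \<Omega>. \<bar>c0 y\<bar> \<le> Bc"
    using compact_bound_sc[OF dom(2) c0_cont] by blast
  define A where "A = measure lborel \<Omega>"
  have Apos: "A > 0" unfolding A_def by (rule measure_pos[OF dom(1,2,4)])
  have om: "\<Omega> \<in> sets lborel" using dom(1) by simp
  have fin: "emeasure lborel \<Omega> < \<infinity>" using dom(2) by (rule emeasure_bounded_finite)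
  define Xb where "Xb = (2 * Bc) * (2 * Bc) * A"
  define Ub where "Ub = 2 * Bu\<^sup>2 * A"
  define Eb where "Eb = Ebd U \<theta> \<alpha> A T Xb"
  define Kt where "Kt = T * (Kc U \<theta> * Eb + Lc U \<theta> \<alpha> A) + T * (Rb g \<gamma> T M A Eb + Vbd g \<gamma> T M A Xb Ub Eb / 2)"
  define C where "C = \<bar>Kt\<bar> / (T * A) + 1"
  have Cpos: "C > 0" unfolding C_def using params(5) Apos by (simp add: add_nonneg_pos)
  show ?thesis
  proof (intro exI[of _ C] conjI allI impI Cpos)
    fix Tr N u p c m
    assume H: "fe_triangulation \<Omega> Tr \<and> quasi_uniform \<sigma> Tr \<and> N \<ge> 1
           \<and> bdf2_solution \<Omega> \<nu> \<alpha> \<theta> U g \<gamma> f u0 c0 T Tr N u p c"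
      and m: "1 \<le> m \<and> m \<le> N - 1"
    have B: "bdfs \<Omega> \<nu> \<theta> U g \<gamma> \<alpha> k T M f u0 c0 Tr N u p c (T / real N)"
      unfolding bdfs_def using dom params nu_cont nu_bounds M H by auto
    have c0b: "nrm2 \<Omega> (c 0) \<le> Xb"
    proof -
      have g: "good \<Omega> (c 0)" using bdfs.cgood[OF B, of 0] by simp
      have "c 0 x * c 0 x \<le> (2 * Bc) * (2 * Bc)" if "x \<in> \<Omega>" for x
      proof -
        have "\<bar>c 0 x\<bar> \<le> 2 * Bc"
          using Pih_bound[OF _ fin om Apos[unfolded A_def] Bc, of Tr x] H that closure_subset bdfs.s_c0[OF B]
          by auto
        then have "\<bar>c 0 x\<bar> * \<bar>c 0 x\<bar> \<le> (2 * Bc) * (2 * Bc)" by (intro mult_mono) auto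
        then show ?thesis by (simp add: abs_mult[symmetric])
      qed
      then have "nrm2 \<Omega> (c 0) \<le> (2 * Bc) * (2 * Bc) * measure lborel \<Omega>"
        unfolding nrm2_def ip_def by (intro int_le_const[OF fin om sq_int[OF fin om g]]) auto
      then show ?thesis unfolding Xb_def A_def .
    qed
    have u0b: "nrm2v \<Omega> (u 0) \<le> Ub"
    proof -
      have g: "vgood \<Omega> (u 0)" using bdfs.ugood[OF B, of 0] by simp
      have "u 0 x \<bullet> u 0 x \<le> 2 * Bu\<^sup>2" if "x \<in> \<Omega>" for x
        using Ih_bound[OF _ Bu, of Tr x] H that closure_subset bdfs.s_u0[OF B] by auto
      then have "nrm2v \<Omega> (u 0) \<le> 2 * Bu\<^sup>2 * measure lborel \<Omega>"
        unfolding nrm2v_def ipv_def by (intro int_le_const[OF fin om vsq_int[OF fin om g]]) auto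
      then show ?thesis unfolding Ub_def A_def .
    qed
    have m1: "1 \<le> m" "m \<le> N - 1" using m by auto
    note ct = bdfs.c_total(2)[OF B c0b m1]
    note ut = bdfs.u_total[OF B c0b u0b m1]
    have main: "nrm2v \<Omega> (u (m + 1)) + nrm2v \<Omega> (hatv u (m + 1))
             + nrm2 \<Omega> (c (m + 1)) + nrm2 \<Omega> (hats c (m + 1))
             + 2 * (T / real N) * (1 / k) * (\<Sum>n = 1..m. gnrm2v \<Omega> (u (n + 1)))
             + 2 * (T / real N) * \<theta> * (\<Sum>n = 1..m. gnrm2 \<Omega> (c (n + 1)))
           \<le> nrm2v \<Omega> (u 1) + nrm2v \<Omega> (hatv u 1) + nrm2 \<Omega> (c 1) + nrm2 \<Omega> (hats c 1) + Kt"
      using ct ut unfolding Kt_def Eb_def A_def by linarith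
    have N1: "N \<ge> 1" using H by auto
    have "Kt \<le> C * T * A"
    proof -
      have "C * T * A = \<bar>Kt\<bar> + T * A" unfolding C_def using params(5) Apos by (simp add: field_simps)
      then show ?thesis using params(5) Apos by (smt (verit) mult_pos_pos)
    qed
    also have "C * T * A = C * (T / real N) * (\<Sum>n = 0..N - 1. A)"
      using N1 by simp
    also have "\<dots> \<le> C * (T / real N) * (\<Sum>n = 0..N - 1.
                  nrm2v \<Omega> (f (real (n + 1) * (T / real N))) + measure lborel \<Omega>)"
    proof (rule mult_left_mono)
      show "(\<Sum>n = 0..N - 1. A) \<le> (\<Sum>n = 0..N - 1. nrm2v \<Omega> (f (real (n + 1) * (T / real N))) + measure lborel \<Omega>)"
        by (rule sum_mono) (simp add: A_def nrm2v_nonneg)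
      show "0 \<le> C * (T / real N)" using Cpos params(5) by simp
    qed
    finally show "nrm2v \<Omega> (u (m + 1)) + nrm2v \<Omega> (hatv u (m + 1))
             + nrm2 \<Omega> (c (m + 1)) + nrm2 \<Omega> (hats c (m + 1))
             + 2 * (T / real N) * (1 / k) * (\<Sum>n = 1..m. gnrm2v \<Omega> (u (n + 1)))
             + 2 * (T / real N) * \<theta> * (\<Sum>n = 1..m. gnrm2 \<Omega> (c (n + 1)))
           \<le> nrm2v \<Omega> (u 1) + nrm2v \<Omega> (hatv u 1) + nrm2 \<Omega> (c 1) + nrm2 \<Omega> (hats c 1)
             + C * (T / real N) * (\<Sum>n = 0..N - 1.
                  nrm2v \<Omega> (f (real (n + 1) * (T / real N))) + measure lborel \<Omega>)"
      using main by linarith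
  qed
qed


end
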